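(* Let $T$ be a directed tree in which the longest directed path has length $1$ (i.e. every vertex is a source or a sink), and let $d$ be the degree of $T$. Then $T$ has span at most $\lfloor d/2\rfloor+1$.
   Context: A directed tree is a DAG (directed acyclic graph) whose underlying undirected graph is a tree. A source (sink) is a vertex with no incoming (outgoing) edge. The degree of a vertex is its total number of incident edges; the degree of a graph is the maximum degree of its vertices. The length of a directed path is its number of edges. An upward-planar layered drawing of a DAG $G$ maps each vertex $v$ to a point in the plane whose y-coordinate $y(v)$ is an integer, and each edge $(u,v)$ (directed from tail $u$ to head $v$) to a strictly y-monotone curve going upward from $u$ to $v$ (so $y(u)<y(v)$), such that no two edges intersect except at common endpoints. The span of an edge $(u,v)$ in such a drawing $\Gamma$ is $y(v)-y(u)$; the span of $\Gamma$ is the maximum span of its edges; the span of an upward-planar DAG is the minimum span over all its upward-planar layered drawings (no embedding prescribed). *)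

theory Defs
  imports "HOL-Analysis.Analysis"
begin

definition digraph :: "'a set \<Rightarrow> ('a \<times> 'a) set \<Rightarrow> bool" where
  "digraph V E \<longleftrightarrow> finite V \<and> E \<subseteq> V \<times> V"

definition uadj :: "('a \<times> 'a) set \<Rightarrow> 'a \<Rightarrow> 'a \<Rightarrow> bool" where
  "uadj E u v \<longleftrightarrow> (u, v) \<in> E \<or> (v, u) \<in> E"

definition ucycle :: "('a \<times> 'a) set \<Rightarrow> 'a list \<Rightarrow> bool" where
  "ucycle E cs \<longleftrightarrow> length cs \<ge> 3 \<and> distinct cs \<and>
     (\<forall>i. Suc i < length cs \<longrightarrow> uadj E (cs ! i) (cs ! Suc i)) \<and>
     uadj E (last cs) (hd cs)"

definition uconnected :: "'a set \<Rightarrow> ('a \<times> 'a) set \<Rightarrow> bool" where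
  "uconnected V E \<longleftrightarrow> (\<forall>u\<in>V. \<forall>v\<in>V. (u, v) \<in> (E \<union> E\<inverse>)\<^sup>*)"

text \<open>A directed tree: a digraph without loops and without antiparallel edges (these
  would be cycles / multi-edges of the underlying graph) whose underlying undirected
  graph is a tree (nonempty, connected, no cycle).  Such a digraph is automatically a DAG.\<close>
definition directed_tree :: "'a set \<Rightarrow> ('a \<times> 'a) set \<Rightarrow> bool" where
  "directed_tree V E \<longleftrightarrow> digraph V E \<and> V \<noteq> {} \<and>
     (\<forall>u v. (u, v) \<in> E \<longrightarrow> u \<noteq> v \<and> (v, u) \<notin> E) \<and>
     uconnected V E \<and> \<not> (\<exists>cs. ucycle E cs)"

definition is_source :: "('a \<times> 'a) set \<Rightarrow> 'a \<Rightarrow> bool" where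
  "is_source E v \<longleftrightarrow> (\<nexists>u. (u, v) \<in> E)"

definition is_sink :: "('a \<times> 'a) set \<Rightarrow> 'a \<Rightarrow> bool" where
  "is_sink E v \<longleftrightarrow> (\<nexists>w. (v, w) \<in> E)"

definition vdegree :: "('a \<times> 'a) set \<Rightarrow> 'a \<Rightarrow> nat" where
  "vdegree E v = card {e \<in> E. fst e = v \<or> snd e = v}"

definition graph_degree :: "'a set \<Rightarrow> ('a \<times> 'a) set \<Rightarrow> nat" where
  "graph_degree V E = Max (vdegree E ` V)"

definition upward_planar_layered_drawing ::
  "'a set \<Rightarrow> ('a \<times> 'a) set \<Rightarrow> ('a \<Rightarrow> real \<times> real) \<Rightarrow> ('a \<times> 'a \<Rightarrow> real \<Rightarrow> real \<times> real) \<Rightarrow> bool" where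
  "upward_planar_layered_drawing V E pos curve \<longleftrightarrow>
     inj_on pos V \<and>
     (\<forall>v\<in>V. snd (pos v) \<in> \<int>) \<and>
     (\<forall>(u, v)\<in>E. path (curve (u, v)) \<and>
        pathstart (curve (u, v)) = pos u \<and> pathfinish (curve (u, v)) = pos v \<and>
        strict_mono_on {0..1} (\<lambda>t. snd (curve (u, v) t))) \<and>
     (\<forall>e\<in>E. \<forall>w\<in>V. pos w \<in> path_image (curve e) \<longrightarrow> w = fst e \<or> w = snd e) \<and>
     (\<forall>e1\<in>E. \<forall>e2\<in>E. e1 \<noteq> e2 \<longrightarrow>
        path_image (curve e1) \<inter> path_image (curve e2) \<subseteq>
          pos ` ({fst e1, snd e1} \<inter> {fst e2, snd e2}))"

definition edge_span :: "('a \<Rightarrow> real \<times> real) \<Rightarrow> 'a \<times> 'a \<Rightarrow> real" where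
  "edge_span pos e = snd (pos (snd e)) - snd (pos (fst e))"

end

theory Submission
  imports Defs
begin


definition pt :: "('a \<Rightarrow> real) \<Rightarrow> ('a \<Rightarrow> int) \<Rightarrow> ('a \<times> 'a \<Rightarrow> real) \<Rightarrow> 'a \<times> 'a \<Rightarrow> int \<Rightarrow> real" where
  "pt x y lane e k = (if k = y (fst e) then x (fst e) else if k = y (snd e) then x (snd e) else lane e)"

definition Good :: "'a set \<Rightarrow> ('a \<times> 'a) set \<Rightarrow> ('a \<Rightarrow> real) \<Rightarrow> ('a \<Rightarrow> int) \<Rightarrow> ('a \<times> 'a \<Rightarrow> real) \<Rightarrow> bool" where
  "Good V E x y lane \<longleftrightarrow>
    (\<forall>e\<in>E. fst e \<in> V \<and> snd e \<in> V \<and> y (fst e) < y (snd e)) \<and>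
    inj_on (\<lambda>w. (x w, y w)) V \<and>
    (\<forall>e\<in>E. \<forall>w\<in>V. y (fst e) < y w \<and> y w < y (snd e) \<longrightarrow> lane e \<noteq> x w) \<and>
    (\<forall>e\<in>E. \<forall>e'\<in>E. e \<noteq> e' \<longrightarrow> (\<forall>k. y (fst e) < k \<and> k < y (snd e) \<and> y (fst e') < k \<and> k < y (snd e')
        \<longrightarrow> lane e \<noteq> lane e')) \<and>
    (\<forall>e\<in>E. \<forall>e'\<in>E. e \<noteq> e' \<longrightarrow> (\<forall>k. y (fst e) \<le> k \<and> k + 1 \<le> y (snd e) \<and> y (fst e') \<le> k \<and> k + 1 \<le> y (snd e')
        \<longrightarrow> (pt x y lane e k - pt x y lane e' k) * (pt x y lane e (k+1) - pt x y lane e' (k+1)) \<ge> 0))"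

definition cl :: "real \<Rightarrow> real" where "cl t = max 0 (min 1 t)"

definition fe :: "('a \<Rightarrow> real) \<Rightarrow> ('a \<Rightarrow> int) \<Rightarrow> ('a \<times> 'a \<Rightarrow> real) \<Rightarrow> 'a \<times> 'a \<Rightarrow> real \<Rightarrow> real" where
  "fe x y lane e h = x (fst e) + (lane e - x (fst e)) * cl (h - of_int (y (fst e)))
      + (x (snd e) - lane e) * cl (h - of_int (y (snd e)) + 1)"

lemma cl_int: "cl (of_int m + l) = (1 - l) * cl (of_int m) + l * cl (of_int (m + 1))"
  if "0 \<le> l" "l \<le> 1" for m :: int and l :: real
proof -
  consider "m \<ge> 1" | "m \<le> -1" | "m = 0" by linarith
  then show ?thesis
  proof cases
    case 1
    then have "real_of_int m \<ge> 1" by simp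
    then show ?thesis using that by (simp add: cl_def)
  next
    case 2
    then have "real_of_int m \<le> -1" by simp
    then show ?thesis using that by (simp add: cl_def)
  next
    case 3
    then show ?thesis using that by (simp add: cl_def)
  qed
qed

lemma fe_pt:
  assumes "y (fst e) < y (snd e)" "y (fst e) \<le> k" "k \<le> y (snd e)"
  shows "fe x y lane e (of_int k) = pt x y lane e k"
proof -
  consider "k = y (fst e)" | "k = y (snd e)" | "y (fst e) < k \<and> k < y (snd e)" using assms by linarith
  then show ?thesis
  proof cases
    case 1
    have "real_of_int (y (fst e)) - real_of_int (y (snd e)) + 1 \<le> 0" using assms by linarith
    then show ?thesis using 1 assms by (simp add: fe_def pt_def cl_def)
  next
    case 2
    have "real_of_int (y (snd e)) - real_of_int (y (fst e)) \<ge> 1" using assms by linarith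
    then show ?thesis using 2 assms by (simp add: fe_def pt_def cl_def)
  next
    case 3
    have a: "real_of_int k - real_of_int (y (fst e)) \<ge> 1" using 3 by linarith
    have b: "real_of_int k - real_of_int (y (snd e)) + 1 \<le> 0" using 3 by linarith
    show ?thesis using 3 a b by (simp add: fe_def pt_def cl_def)
  qed
qed

lemma fe_interp:
  assumes "0 \<le> l" "l \<le> 1"
  shows "fe x y lane e (of_int k + l) = (1 - l) * fe x y lane e (of_int k) + l * fe x y lane e (of_int (k+1))"
proof -
  have 1: "cl (of_int k + l - of_int (y (fst e))) = (1 - l) * cl (of_int (k - y (fst e))) + l * cl (of_int (k - y (fst e) + 1))"
    using cl_int[OF assms, of "k - y (fst e)"] by (simp add: algebra_simps)
  have 2: "cl (of_int k + l - of_int (y (snd e)) + 1) = (1 - l) * cl (of_int (k - y (snd e) + 1)) + l * cl (of_int (k - y (snd e) + 1 + 1))"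
    using cl_int[OF assms, of "k - y (snd e) + 1"] by (simp add: algebra_simps)
  show ?thesis unfolding fe_def 1 2 by (simp add: algebra_simps)
qed

lemma cont_fe: "continuous_on S (fe x y lane e)"
  unfolding fe_def cl_def by (intro continuous_intros)

lemma GoodD0: "Good V E x y lane \<Longrightarrow> e \<in> E \<Longrightarrow> fst e \<in> V \<and> snd e \<in> V \<and> y (fst e) < y (snd e)"
  unfolding Good_def by (drule conjunct1) blast
lemma GoodD1: "Good V E x y lane \<Longrightarrow> inj_on (\<lambda>w. (x w, y w)) V"
  unfolding Good_def by (drule conjunct2, drule conjunct1) assumption
lemma GoodD2: "Good V E x y lane \<Longrightarrow> e \<in> E \<Longrightarrow> w \<in> V \<Longrightarrow> y (fst e) < y w \<Longrightarrow> y w < y (snd e) \<Longrightarrow> lane e \<noteq> x w"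
  unfolding Good_def by (drule conjunct2, drule conjunct2, drule conjunct1) blast
lemma GoodD3: "Good V E x y lane \<Longrightarrow> e \<in> E \<Longrightarrow> e' \<in> E \<Longrightarrow> e \<noteq> e' \<Longrightarrow> y (fst e) < k \<Longrightarrow> k < y (snd e) \<Longrightarrow> y (fst e') < k \<Longrightarrow> k < y (snd e') \<Longrightarrow> lane e \<noteq> lane e'"
  unfolding Good_def by (drule conjunct2, drule conjunct2, drule conjunct2, drule conjunct1) blast
lemma GoodD4: "Good V E x y lane \<Longrightarrow> e \<in> E \<Longrightarrow> e' \<in> E \<Longrightarrow> e \<noteq> e' \<Longrightarrow> y (fst e) \<le> k \<Longrightarrow> k + 1 \<le> y (snd e) \<Longrightarrow> y (fst e') \<le> k \<Longrightarrow> k + 1 \<le> y (snd e') \<Longrightarrow> (pt x y lane e k - pt x y lane e' k) * (pt x y lane e (k+1) - pt x y lane e' (k+1)) \<ge> 0"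
  unfolding Good_def by (drule conjunct2, drule conjunct2, drule conjunct2, drule conjunct2) blast


lemma Good_pt_eq:
  assumes G: "Good V E x y lane" and e: "e \<in> E" and e': "e' \<in> E"
    and k: "y (fst e) \<le> k" "k \<le> y (snd e)" "y (fst e') \<le> k" "k \<le> y (snd e')"
    and eq: "pt x y lane e k = pt x y lane e' k" and ne: "e \<noteq> e'"
  shows "\<exists>w. w \<in> {fst e, snd e} \<and> w \<in> {fst e', snd e'} \<and> y w = k \<and> x w = pt x y lane e k"
proof -
  have E1: "fst e \<in> V" "snd e \<in> V" "fst e' \<in> V" "snd e' \<in> V" using GoodD0[OF G e] GoodD0[OF G e'] by auto
  have inj: "inj_on (\<lambda>w. (x w, y w)) V" using GoodD1[OF G] .
  have G2: "\<And>f w. f \<in> E \<Longrightarrow> w \<in> V \<Longrightarrow> y (fst f) < y w \<Longrightarrow> y w < y (snd f) \<Longrightarrow> lane f \<noteq> x w"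
    using GoodD2[OF G] by blast
  have G3: "\<And>k. e \<noteq> e' \<Longrightarrow> y (fst e) < k \<Longrightarrow> k < y (snd e) \<Longrightarrow> y (fst e') < k \<Longrightarrow> k < y (snd e') \<Longrightarrow> lane e \<noteq> lane e'"
    using GoodD3[OF G e e'] by blast
  have injE: "\<And>a b. a \<in> V \<Longrightarrow> b \<in> V \<Longrightarrow> x a = x b \<Longrightarrow> y a = y b \<Longrightarrow> a = b"
    using inj unfolding inj_on_def by auto
  show ?thesis
  proof -
    consider "k = y (fst e)" | "k \<noteq> y (fst e) \<and> k = y (snd e)" | "k \<noteq> y (fst e) \<and> k \<noteq> y (snd e)" by blast
    then show ?thesis
    proof cases
      case 1
      then have pe: "pt x y lane e k = x (fst e)" by (simp add: pt_def)
      consider "k = y (fst e')" | "k \<noteq> y (fst e') \<and> k = y (snd e')" | "k \<noteq> y (fst e') \<and> k \<noteq> y (snd e')" by blast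
      then show ?thesis
      proof cases
        case 1
        then have "fst e = fst e'" using injE[of "fst e" "fst e'"] E1 eq pe \<open>k = y (fst e)\<close> by (simp add: pt_def)
        then show ?thesis using pe \<open>k = y (fst e)\<close> by auto
      next
        case 2
        then have "fst e = snd e'" using injE[of "fst e" "snd e'"] E1 eq pe \<open>k = y (fst e)\<close> by (simp add: pt_def)
        then show ?thesis using pe \<open>k = y (fst e)\<close> by auto
      next
        case 3
        then have "lane e' = x (fst e)" using eq pe by (simp add: pt_def)
        moreover have "lane e' \<noteq> x (fst e)" using G2[OF e' E1(1)] 3 k \<open>k = y (fst e)\<close> by auto
        ultimately show ?thesis by simp
      qed
    next
      case 2
      then have pe: "pt x y lane e k = x (snd e)" by (simp add: pt_def)
      consider "k = y (fst e')" | "k \<noteq> y (fst e') \<and> k = y (snd e')" | "k \<noteq> y (fst e') \<and> k \<noteq> y (snd e')" by blast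
      then show ?thesis
      proof cases
        case 1
        then have "snd e = fst e'" using injE[of "snd e" "fst e'"] E1 eq pe 2 by (simp add: pt_def)
        then show ?thesis using pe 2 by auto
      next
        case 3: 2
        then have "snd e = snd e'" using injE[of "snd e" "snd e'"] E1 eq pe 2 by (simp add: pt_def)
        then show ?thesis using pe 2 by auto
      next
        case 3
        then have "lane e' = x (snd e)" using eq pe by (simp add: pt_def)
        moreover have "lane e' \<noteq> x (snd e)" using G2[OF e' E1(2)] 3 k 2 by auto
        ultimately show ?thesis by simp
      qed
    next
      case 3
      then have pe: "pt x y lane e k = lane e" by (simp add: pt_def)
      have int1: "y (fst e) < k" "k < y (snd e)" using 3 k by auto
      consider "k = y (fst e')" | "k \<noteq> y (fst e') \<and> k = y (snd e')" | "k \<noteq> y (fst e') \<and> k \<noteq> y (snd e')" by blast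
      then show ?thesis
      proof cases
        case 1
        then have "lane e = x (fst e')" using eq pe by (simp add: pt_def)
        moreover have "lane e \<noteq> x (fst e')" using G2[OF e E1(3)] int1 1 by auto
        ultimately show ?thesis by simp
      next
        case 2
        then have "lane e = x (snd e')" using eq pe by (simp add: pt_def)
        moreover have "lane e \<noteq> x (snd e')" using G2[OF e E1(4)] int1 2 by auto
        ultimately show ?thesis by simp
      next
        case 4: 3
        then have "lane e = lane e'" using eq pe by (simp add: pt_def)
        moreover have "lane e \<noteq> lane e'" using G3[OF ne int1] 4 k by auto
        ultimately show ?thesis by simp
      qed
    qed
  qed
qed


definition posf :: "('a \<Rightarrow> real) \<Rightarrow> ('a \<Rightarrow> int) \<Rightarrow> 'a \<Rightarrow> real \<times> real" where
  "posf x y w = (x w, real_of_int (y w))"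

definition hgt :: "('a \<Rightarrow> int) \<Rightarrow> 'a \<times> 'a \<Rightarrow> real \<Rightarrow> real" where
  "hgt y e t = of_int (y (fst e)) + t * of_int (y (snd e) - y (fst e))"

definition crv :: "('a \<Rightarrow> real) \<Rightarrow> ('a \<Rightarrow> int) \<Rightarrow> ('a \<times> 'a \<Rightarrow> real) \<Rightarrow> 'a \<times> 'a \<Rightarrow> real \<Rightarrow> real \<times> real" where
  "crv x y lane e t = (fe x y lane e (hgt y e t), hgt y e t)"

lemma Good_two_eq:
  assumes G: "Good V E x y lane" and e: "e \<in> E" and e': "e' \<in> E" and ne: "e \<noteq> e'"
    and k: "y (fst e) \<le> k" "k + 1 \<le> y (snd e)" "y (fst e') \<le> k" "k + 1 \<le> y (snd e')"
    and eq0: "pt x y lane e k = pt x y lane e' k" and eq1: "pt x y lane e (k+1) = pt x y lane e' (k+1)"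
  shows False
proof -
  obtain w0 where w0: "w0 \<in> {fst e, snd e}" "w0 \<in> {fst e', snd e'}" "y w0 = k"
    using Good_pt_eq[OF G e e' _ _ _ _ eq0 ne] k by auto
  obtain w1 where w1: "w1 \<in> {fst e, snd e}" "w1 \<in> {fst e', snd e'}" "y w1 = k + 1"
    using Good_pt_eq[OF G e e' _ _ _ _ eq1 ne] k by auto
  have l1: "y (fst e) < y (snd e)" "y (fst e') < y (snd e')" using GoodD0[OF G e] GoodD0[OF G e'] by auto
  have "w0 = fst e" "w1 = snd e" using w0 w1 l1 by auto
  moreover have "w0 = fst e'" "w1 = snd e'" using w0 w1 l1 by auto
  ultimately have "e = e'" by (simp add: prod_eq_iff)
  then show False using ne by simp
qed

lemma Good_drawing:
  assumes G: "Good V E x y lane"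
  shows "upward_planar_layered_drawing V E (posf x y) (crv x y lane)"
proof -
  have inj: "inj_on (\<lambda>w. (x w, y w)) V" using GoodD1[OF G] .
  have injE: "\<And>a b. a \<in> V \<Longrightarrow> b \<in> V \<Longrightarrow> x a = x b \<Longrightarrow> y a = y b \<Longrightarrow> a = b"
    using inj unfolding inj_on_def by auto
  have c1: "inj_on (posf x y) V"
    unfolding inj_on_def posf_def using injE by auto
  have c2: "\<forall>v\<in>V. snd (posf x y v) \<in> \<int>" by (simp add: posf_def)
  have hgt_range: "of_int (y (fst e)) \<le> hgt y e t \<and> hgt y e t \<le> of_int (y (snd e))"
    if "e \<in> E" "t \<in> {0..1}" for e t
  proof -
    have l: "y (fst e) < y (snd e)" using GoodD0[OF G that(1)] by auto
    have "0 \<le> t * of_int (y (snd e) - y (fst e))" using that l by simp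
    moreover have "t * of_int (y (snd e) - y (fst e)) \<le> 1 * of_int (y (snd e) - y (fst e))"
      using that l by (intro mult_right_mono) auto
    ultimately show ?thesis unfolding hgt_def by auto
  qed
  have c3: "\<forall>(u, v)\<in>E. path (crv x y lane (u, v)) \<and>
        pathstart (crv x y lane (u, v)) = posf x y u \<and> pathfinish (crv x y lane (u, v)) = posf x y v \<and>
        strict_mono_on {0..1} (\<lambda>t. snd (crv x y lane (u, v) t))"
  proof (clarify)
    fix u v assume uv: "(u, v) \<in> E"
    have l: "y u < y v" using GoodD0[OF G uv] by auto
    have ch: "continuous_on {0..1} (hgt y (u, v))" unfolding hgt_def by (intro continuous_intros)
    have "continuous_on {0..1} (crv x y lane (u, v))"
      unfolding crv_def
      by (intro continuous_on_Pair ch continuous_on_compose2[OF cont_fe[of UNIV] ch]) auto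
    then have p: "path (crv x y lane (u, v))" unfolding path_def .
    have s: "pathstart (crv x y lane (u, v)) = posf x y u"
      unfolding pathstart_def crv_def posf_def hgt_def
      using fe_pt[of y "(u,v)" "y u" x lane] l by (simp add: pt_def)
    have f: "pathfinish (crv x y lane (u, v)) = posf x y v"
      unfolding pathfinish_def crv_def posf_def hgt_def
      using fe_pt[of y "(u,v)" "y v" x lane] l by (simp add: pt_def)
    have m: "strict_mono_on {0..1} (\<lambda>t. snd (crv x y lane (u, v) t))"
      unfolding strict_mono_on_def crv_def hgt_def using l by (auto intro!: mult_strict_right_mono)
    show "path (crv x y lane (u, v)) \<and>
        pathstart (crv x y lane (u, v)) = posf x y u \<and> pathfinish (crv x y lane (u, v)) = posf x y v \<and>
        strict_mono_on {0..1} (\<lambda>t. snd (crv x y lane (u, v) t))" using p s f m by blast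
  qed
  have c4: "\<forall>e\<in>E. \<forall>w\<in>V. posf x y w \<in> path_image (crv x y lane e) \<longrightarrow> w = fst e \<or> w = snd e"
  proof (intro ballI impI)
    fix e w assume e: "e \<in> E" and w: "w \<in> V" and pw: "posf x y w \<in> path_image (crv x y lane e)"
    then obtain t where t: "t \<in> {0..1}" "crv x y lane e t = posf x y w" unfolding path_image_def by (metis imageE)
    have ht: "(fe x y lane e (hgt y e t), hgt y e t) = (x w, of_int (y w))"
      using t(2) unfolding crv_def posf_def .
    have h: "hgt y e t = of_int (y w)" using ht by (rule Pair_inject)
    have fx: "fe x y lane e (hgt y e t) = x w" using ht by (rule Pair_inject)
    have r: "y (fst e) \<le> y w" "y w \<le> y (snd e)" using hgt_range[OF e t(1)] h by auto
    have l: "y (fst e) < y (snd e)" using GoodD0[OF G e] by auto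
    have pe: "pt x y lane e (y w) = x w" using fe_pt[OF l r, of x lane] fx h by simp
    have V2: "fst e \<in> V" "snd e \<in> V" using GoodD0[OF G e] by auto
    show "w = fst e \<or> w = snd e"
    proof (cases "y w = y (fst e)")
      case True
      then have "x (fst e) = x w" using pe by (simp add: pt_def)
      then have "fst e = w" using injE[OF V2(1) w] True by simp
      then show ?thesis by simp
    next
      case False
      note F = False
      show ?thesis
      proof (cases "y w = y (snd e)")
        case True
        then have "x (snd e) = x w" using pe F by (simp add: pt_def)
        then have "snd e = w" using injE[OF V2(2) w] True by simp
        then show ?thesis by simp
      next
        case False
        then have "lane e = x w" using pe F by (simp add: pt_def)
        moreover have "lane e \<noteq> x w" using GoodD2[OF G e w] r F False by auto
        ultimately show ?thesis by simp
      qed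
    qed
  qed
  have c5: "\<forall>e1\<in>E. \<forall>e2\<in>E. e1 \<noteq> e2 \<longrightarrow>
        path_image (crv x y lane e1) \<inter> path_image (crv x y lane e2) \<subseteq>
          posf x y ` ({fst e1, snd e1} \<inter> {fst e2, snd e2})"
  proof (intro ballI impI subsetI)
    fix e1 e2 z assume e1: "e1 \<in> E" and e2: "e2 \<in> E" and ne: "e1 \<noteq> e2"
      and z: "z \<in> path_image (crv x y lane e1) \<inter> path_image (crv x y lane e2)"
    obtain t1 where t1: "t1 \<in> {0..1}" "z = crv x y lane e1 t1" using z unfolding path_image_def by auto
    obtain t2 where t2: "t2 \<in> {0..1}" "z = crv x y lane e2 t2" using z unfolding path_image_def by auto
    define h where "h = snd z"
    have h1: "hgt y e1 t1 = h" "hgt y e2 t2 = h" using t1 t2 unfolding h_def crv_def by auto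
    have fz: "fe x y lane e1 h = fst z" "fe x y lane e2 h = fst z" using t1 t2 h1 unfolding crv_def by auto
    have r1: "of_int (y (fst e1)) \<le> h" "h \<le> of_int (y (snd e1))" using hgt_range[OF e1 t1(1)] h1 by auto
    have r2: "of_int (y (fst e2)) \<le> h" "h \<le> of_int (y (snd e2))" using hgt_range[OF e2 t2(1)] h1 by auto
    have l1: "y (fst e1) < y (snd e1)" using GoodD0[OF G e1] by auto
    have l2: "y (fst e2) < y (snd e2)" using GoodD0[OF G e2] by auto
    define k where "k = floor h"
    define l where "l = h - of_int k"
    have l01: "0 \<le> l" "l < 1" unfolding l_def k_def by linarith+
    have hk: "h = of_int k + l" unfolding l_def by simp
    have k1: "y (fst e1) \<le> k" "y (fst e2) \<le> k" using r1 r2 unfolding k_def by (auto simp: le_floor_iff)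
    show "z \<in> posf x y ` ({fst e1, snd e1} \<inter> {fst e2, snd e2})"
    proof (cases "l = 0")
      case True
      then have hk0: "h = of_int k" using hk by simp
      have k2: "k \<le> y (snd e1)" "k \<le> y (snd e2)" using r1 r2 hk0 by auto
      have "pt x y lane e1 k = fst z" using fe_pt[OF l1 k1(1) k2(1)] fz hk0 by simp
      moreover have "pt x y lane e2 k = fst z" using fe_pt[OF l2 k1(2) k2(2)] fz hk0 by simp
      ultimately obtain w where w: "w \<in> {fst e1, snd e1}" "w \<in> {fst e2, snd e2}" "y w = k" "x w = fst z"
        using Good_pt_eq[OF G e1 e2 k1(1) k2(1) k1(2) k2(2) _ ne] by auto
      have "z = posf x y w" unfolding posf_def using w hk0 h_def by (simp add: prod_eq_iff)
      then show ?thesis using w by auto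
    next
      case False
      then have lp: "0 < l" using l01 by simp
      have k2: "k + 1 \<le> y (snd e1)" "k + 1 \<le> y (snd e2)"
      proof -
        have "of_int k < h" using hk lp by simp
        then have "(of_int k::real) < of_int (y (snd e1))" "(of_int k::real) < of_int (y (snd e2))" using r1 r2 by auto
        then show "k + 1 \<le> y (snd e1)" "k + 1 \<le> y (snd e2)" by linarith+
      qed
      have i1: "fe x y lane e1 h = (1 - l) * pt x y lane e1 k + l * pt x y lane e1 (k+1)"
      proof -
        have a: "fe x y lane e1 h = (1 - l) * fe x y lane e1 (of_int k) + l * fe x y lane e1 (of_int (k+1))"
          using fe_interp[where l=l and x=x and y=y and lane=lane and e=e1 and k=k] l01 hk by simp
        have b: "fe x y lane e1 (of_int k) = pt x y lane e1 k" using fe_pt[OF l1 k1(1)] k2 by simp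
        have c: "fe x y lane e1 (of_int (k+1)) = pt x y lane e1 (k+1)" using fe_pt[OF l1, where k="k+1"] k1 k2 by simp
        show ?thesis using a b c by simp
      qed
      have i2: "fe x y lane e2 h = (1 - l) * pt x y lane e2 k + l * pt x y lane e2 (k+1)"
      proof -
        have a: "fe x y lane e2 h = (1 - l) * fe x y lane e2 (of_int k) + l * fe x y lane e2 (of_int (k+1))"
          using fe_interp[where l=l and x=x and y=y and lane=lane and e=e2 and k=k] l01 hk by simp
        have b: "fe x y lane e2 (of_int k) = pt x y lane e2 k" using fe_pt[OF l2 k1(2)] k2 by simp
        have c: "fe x y lane e2 (of_int (k+1)) = pt x y lane e2 (k+1)" using fe_pt[OF l2, where k="k+1"] k1 k2 by simp
        show ?thesis using a b c by simp
      qed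
      define d0 where "d0 = pt x y lane e1 k - pt x y lane e2 k"
      define d1 where "d1 = pt x y lane e1 (k+1) - pt x y lane e2 (k+1)"
      have prod: "d0 * d1 \<ge> 0" unfolding d0_def d1_def using GoodD4[OF G e1 e2 ne k1(1) k2(1) k1(2) k2(2)] .
      have sum: "(1 - l) * d0 + l * d1 = 0" using i1 i2 fz unfolding d0_def d1_def by (simp add: algebra_simps)
      have "d0 = 0 \<and> d1 = 0"
      proof (rule ccontr)
        assume nz: "\<not> (d0 = 0 \<and> d1 = 0)"
        have a: "0 < 1 - l" using l01 by simp
        consider "d0 > 0" | "d0 < 0" | "d0 = 0" by linarith
        then show False
        proof cases
          case 1
          then have "d1 \<ge> 0" using prod by (simp add: zero_le_mult_iff)
          then have "(1 - l) * d0 + l * d1 > 0" using a 1 lp by (simp add: add_pos_nonneg)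
          then show False using sum by simp
        next
          case 2
          then have "d1 \<le> 0" using prod by (simp add: zero_le_mult_iff)
          then have "(1 - l) * d0 + l * d1 < 0" using a 2 lp
            by (simp add: add_neg_nonpos mult_pos_neg mult_nonneg_nonpos)
          then show False using sum by simp
        next
          case 3
          then have "l * d1 = 0" using sum by simp
          then have "d1 = 0" using lp by simp
          then show False using nz 3 by simp
        qed
      qed
      then show ?thesis using Good_two_eq[OF G e1 e2 ne k1(1) k2(1) k1(2) k2(2)] unfolding d0_def d1_def by simp
    qed
  qed
  show ?thesis unfolding upward_planar_layered_drawing_def using c1 c2 c3 c4 c5 by blast
qed



inductive rtree :: "'a set \<Rightarrow> ('a \<times> 'a) set \<Rightarrow> 'a \<Rightarrow> bool" where
  base: "rtree {r} {} r"
| attach: "rtree V1 E1 r \<Longrightarrow> rtree V2 E2 c \<Longrightarrow> V1 \<inter> V2 = {} \<Longrightarrow> e = (r, c) \<or> e = (c, r)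
     \<Longrightarrow> rtree (V1 \<union> V2) (insert e (E1 \<union> E2)) r"

lemma rtree_eq: "rtree V E r \<Longrightarrow> V = V' \<Longrightarrow> E = E' \<Longrightarrow> rtree V' E' r" by simp

lemma rtree_basic: "rtree V E r \<Longrightarrow> finite V \<and> finite E \<and> r \<in> V \<and> E \<subseteq> V \<times> V"
  by (induction rule: rtree.induct) auto

lemma rtree_insert_leaf:
  assumes "rtree V E r" "n \<in> V" "l \<notin> V" "e = (n, l) \<or> e = (l, n)"
  shows "rtree (insert l V) (insert e E) r"
  using assms
proof (induction arbitrary: n rule: rtree.induct)
  case (base r)
  then have "n = r" by simp
  have "rtree ({r} \<union> {l}) (insert e ({} \<union> {})) r"
    by (rule rtree.attach[OF rtree.base rtree.base]) (use base \<open>n = r\<close> in auto)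
  then show ?case by (rule rtree_eq) auto
next
  case (attach V1 E1 r V2 E2 c e')
  show ?case
  proof (cases "n \<in> V1")
    case True
    have "rtree (insert l V1) (insert e E1) r" using attach True by auto
    then have "rtree (insert l V1 \<union> V2) (insert e' (insert e E1 \<union> E2)) r"
      by (rule rtree.attach[OF _ attach(2)]) (use attach in auto)
    then show ?thesis by (rule rtree_eq) auto
  next
    case False
    then have "n \<in> V2" using attach by auto
    have "rtree (insert l V2) (insert e E2) c" using attach \<open>n \<in> V2\<close> by auto
    then have "rtree (V1 \<union> insert l V2) (insert e' (E1 \<union> insert e E2)) r"
      by (rule rtree.attach[OF attach(1)]) (use attach in auto)
    then show ?thesis by (rule rtree_eq) auto
  qed
qed

lemma uadj_sym: "uadj E u v \<longleftrightarrow> uadj E v u" unfolding uadj_def by auto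

lemma dtree_facts:
  assumes "directed_tree V E"
  shows "finite V" "E \<subseteq> V \<times> V" "\<And>u v. (u, v) \<in> E \<Longrightarrow> u \<noteq> v \<and> (v, u) \<notin> E"
    "\<And>u v. u \<in> V \<Longrightarrow> v \<in> V \<Longrightarrow> (u, v) \<in> (E \<union> E\<inverse>)\<^sup>*" "\<And>cs. \<not> ucycle E cs" "V \<noteq> {}"
  using assms unfolding directed_tree_def digraph_def uconnected_def by auto

lemma uadj_V:
  assumes "directed_tree V E" "uadj E u v"
  shows "u \<in> V" "v \<in> V" "u \<noteq> v"
  using assms dtree_facts[OF assms(1)] unfolding uadj_def by auto

lemma leaf_exists:
  assumes T: "directed_tree V E" and r: "r \<in> V" and ne: "V \<noteq> {r}"
  shows "\<exists>l n. l \<in> V \<and> l \<noteq> r \<and> uadj E l n \<and> (\<forall>w. uadj E l w \<longrightarrow> w = n)"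
proof -
  note F = dtree_facts[OF T]
  define P where "P p \<longleftrightarrow> p \<noteq> [] \<and> hd p = r \<and> distinct p \<and> set p \<subseteq> V \<and>
      (\<forall>i. Suc i < length p \<longrightarrow> uadj E (p!i) (p!Suc i))" for p
  have P0: "P [r]" unfolding P_def using r by auto
  have bnd: "\<forall>p. P p \<longrightarrow> length p < card V + 1"
  proof (intro allI impI)
    fix p assume "P p"
    then have "card (set p) = length p" "card (set p) \<le> card V"
      unfolding P_def using F(1) by (simp add: distinct_card, meson card_mono)
    then show "length p < card V + 1" by simp
  qed
  obtain p where Pp: "P p" and pmax: "\<And>q. P q \<Longrightarrow> length q \<le> length p"
    using ex_has_greatest_nat[of P "[r]" length "card V + 1", OF P0 bnd] by blast
  have ext: "P (p @ [w])" if w: "w \<in> V" "w \<notin> set p" "uadj E (last p) w" for w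
  proof -
    have pne: "p \<noteq> []" using Pp unfolding P_def by auto
    have adj: "uadj E ((p @ [w]) ! i) ((p @ [w]) ! Suc i)" if i: "Suc i < length (p @ [w])" for i
    proof (cases "Suc i < length p")
      case True
      then show ?thesis using Pp unfolding P_def by (auto simp: nth_append)
    next
      case False
      then have si: "Suc i = length p" using i by simp
      then have "i = length p - 1" by simp
      then show ?thesis using w pne si by (auto simp: nth_append last_conv_nth)
    qed
    show ?thesis unfolding P_def using Pp w adj pne unfolding P_def by auto
  qed
  have len2: "length p \<ge> 2"
  proof (rule ccontr)
    assume "\<not> length p \<ge> 2"
    moreover have "p \<noteq> []" using Pp unfolding P_def by auto
    ultimately have "length p = 1" by (metis One_nat_def length_0_conv less_2_cases not_le)
    then have pr: "p = [r]" using Pp unfolding P_def by (cases p) auto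
    obtain w where w: "w \<in> V" "w \<noteq> r" using ne r by auto
    have "(r, w) \<in> (E \<union> E\<inverse>)\<^sup>*" using F(4) r w by auto
    then obtain z where z: "(r, z) \<in> E \<union> E\<inverse>" using w(2) by (cases rule: converse_rtranclE) auto
    then have uz: "uadj E r z" unfolding uadj_def by auto
    have "z \<in> V" "z \<noteq> r" using uadj_V[OF T uz] by auto
    then have "P (p @ [z])" using ext uz pr by auto
    then have "length (p @ [z]) \<le> length p" using pmax by blast
    then show False by simp
  qed
  define l where "l = last p"
  define n where "n = p ! (length p - 2)"
  have lnth: "l = p ! (length p - 1)" unfolding l_def using len2 by (intro last_conv_nth) auto
  have uln: "uadj E l n"
  proof -
    have "uadj E (p ! (length p - 2)) (p ! Suc (length p - 2))" using Pp len2 unfolding P_def by auto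
    moreover have "Suc (length p - 2) = length p - 1" using len2 by simp
    ultimately show ?thesis unfolding lnth n_def using uadj_sym by metis
  qed
  have lV: "l \<in> V" using Pp len2 unfolding P_def l_def by auto
  have lr: "l \<noteq> r"
  proof
    assume "l = r"
    moreover have "hd p = p ! 0" using len2 by (intro hd_conv_nth) auto
    ultimately have "p ! (length p - 1) = p ! 0" using Pp lnth unfolding P_def by auto
    then have "length p - 1 = 0" using Pp len2 unfolding P_def by (simp add: nth_eq_iff_index_eq)
    then show False using len2 by simp
  qed
  have uniq: "w = n" if uw: "uadj E l w" for w
  proof -
    have wV: "w \<in> V" "w \<noteq> l" using uadj_V[OF T uw] by auto
    show ?thesis
    proof (cases "w \<in> set p")
      case False
      then have "P (p @ [w])" using ext wV uw l_def by auto
      then have "length (p @ [w]) \<le> length p" using pmax by blast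
      then show ?thesis by simp
    next
      case True
      then obtain i where i: "i < length p" "p ! i = w" by (auto simp: in_set_conv_nth)
      have "i \<noteq> length p - 1" using i wV lnth by auto
      show ?thesis
      proof (cases "i = length p - 2")
        case True
        then show ?thesis using i n_def by simp
      next
        case False
        then have ilt: "i + 3 \<le> length p" using i \<open>i \<noteq> length p - 1\<close> by linarith
        define cs where "cs = drop i p"
        have "ucycle E cs"
          unfolding ucycle_def
        proof (intro conjI allI impI)
          show "3 \<le> length cs" unfolding cs_def using ilt by simp
          show "distinct cs" unfolding cs_def using Pp unfolding P_def by simp
          fix j assume j: "Suc j < length cs"
          then have "Suc (i + j) < length p" unfolding cs_def by simp
          then have "uadj E (p ! (i + j)) (p ! Suc (i + j))" using Pp unfolding P_def by blast
          then show "uadj E (cs ! j) (cs ! Suc j)" unfolding cs_def using j by (simp add: cs_def)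
        next
          have "last cs = l" unfolding cs_def l_def using ilt by simp
          moreover have "hd cs = w" unfolding cs_def using i by (simp add: hd_drop_conv_nth)
          ultimately show "uadj E (last cs) (hd cs)" using uw by simp
        qed
        then show ?thesis using F(5) by blast
      qed
    qed
  qed
  show ?thesis using lV lr uln uniq by blast
qed


lemma remove_leaf:
  assumes T: "directed_tree V E" and lV: "l \<in> V" and uln: "uadj E l n"
    and uniq: "\<forall>w. uadj E l w \<longrightarrow> w = n"
  shows "directed_tree (V - {l}) {e\<in>E. fst e \<noteq> l \<and> snd e \<noteq> l}"
    "n \<in> V - {l}"
    "\<exists>e0. (e0 = (n, l) \<or> e0 = (l, n)) \<and> E = insert e0 {e\<in>E. fst e \<noteq> l \<and> snd e \<noteq> l}"
proof -
  note F = dtree_facts[OF T]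
  define E' where "E' = {e\<in>E. fst e \<noteq> l \<and> snd e \<noteq> l}"
  have nV: "n \<in> V - {l}" using uadj_V[OF T uln] by auto
  then show "n \<in> V - {l}" .
  have conn: "(w \<noteq> l \<longrightarrow> (u, w) \<in> (E' \<union> E'\<inverse>)\<^sup>*) \<and> (w = l \<longrightarrow> (u, n) \<in> (E' \<union> E'\<inverse>)\<^sup>*)"
    if "(u, w) \<in> (E \<union> E\<inverse>)\<^sup>*" "u \<noteq> l" for u w
    using that(1)
  proof (induction rule: rtrancl_induct)
    case base
    then show ?case using that(2) by auto
  next
    case (step w z)
    have uwz: "uadj E w z" using step(2) unfolding uadj_def by auto
    show ?case
    proof (cases "z = l")
      case True
      show ?thesis
      proof (cases "w = l")
        case True
        then show ?thesis using step(3) \<open>z = l\<close> by auto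
      next
        case False
        have "uadj E l w" using uwz \<open>z = l\<close> uadj_sym by metis
        then have "w = n" using uniq by auto
        then show ?thesis using step(3) False \<open>z = l\<close> by auto
      qed
    next
      case False
      show ?thesis
      proof (cases "w = l")
        case True
        then have "z = n" using uniq uwz by auto
        then show ?thesis using step(3) True False by auto
      next
        case wl: False
        have "(w, z) \<in> E' \<union> E'\<inverse>" using step(2) wl False unfolding E'_def by auto
        then show ?thesis using step(3) wl False by (meson rtrancl.rtrancl_into_rtrancl)
      qed
    qed
  qed
  have dg: "digraph (V - {l}) E'" unfolding digraph_def E'_def using F(1,2) by auto
  have uc: "uconnected (V - {l}) E'"
    unfolding uconnected_def using conn F(4) by blast
  have ncyc: "\<not> (\<exists>cs. ucycle E' cs)"
  proof
    assume "\<exists>cs. ucycle E' cs"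
    then obtain cs where "ucycle E' cs" by blast
    then have "ucycle E cs" unfolding ucycle_def uadj_def E'_def by auto
    then show False using F(5) by blast
  qed
  show "directed_tree (V - {l}) {e\<in>E. fst e \<noteq> l \<and> snd e \<noteq> l}"
    unfolding E'_def[symmetric] directed_tree_def using dg uc ncyc nV F(3) unfolding E'_def by auto
  obtain e0 where e0: "e0 \<in> E" "e0 = (n, l) \<or> e0 = (l, n)" using uln unfolding uadj_def by auto
  have "E = insert e0 E'"
  proof
    show "insert e0 E' \<subseteq> E" using e0 unfolding E'_def by auto
    show "E \<subseteq> insert e0 E'"
    proof
      fix e assume e: "e \<in> E"
      show "e \<in> insert e0 E'"
      proof (cases "fst e = l \<or> snd e = l")
        case True
        then have "e = (l, snd e) \<or> e = (fst e, l)" by (cases e) auto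
        then have "e = (l, n) \<or> e = (n, l)"
          using uniq e unfolding uadj_def by (metis fst_conv snd_conv)
        then show ?thesis using e0 e F(3) by auto
      next
        case False
        then show ?thesis using e unfolding E'_def by auto
      qed
    qed
  qed
  then show "\<exists>e0. (e0 = (n, l) \<or> e0 = (l, n)) \<and> E = insert e0 {e\<in>E. fst e \<noteq> l \<and> snd e \<noteq> l}"
    using e0 unfolding E'_def by blast
qed

lemma tree_to_rtree:
  assumes "directed_tree V E" "r \<in> V"
  shows "rtree V E r"
  using assms
proof (induction "card V" arbitrary: V E rule: less_induct)
  case less
  note T = less.prems(1)
  note F = dtree_facts[OF T]
  show ?case
  proof (cases "V = {r}")
    case True
    have "E = {}"
    proof (rule ccontr)
      assume "E \<noteq> {}"
      then obtain e where "e \<in> E" by auto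
      then have "fst e = r" "snd e = r" using F(2) True by auto
      then have "(r, r) \<in> E" using \<open>e \<in> E\<close> by (metis prod.collapse)
      then show False using F(3)[of r r] by auto
    qed
    then show ?thesis using True rtree.base by simp
  next
    case False
    obtain l n where ln: "l \<in> V" "l \<noteq> r" "uadj E l n" "\<forall>w. uadj E l w \<longrightarrow> w = n"
      using leaf_exists[OF T less.prems(2) False] by blast
    note R = remove_leaf[OF T ln(1) ln(3) ln(4)]
    have "card (V - {l}) < card V" using ln(1) F(1) by (meson card_Diff1_less)
    then have rt: "rtree (V - {l}) {e\<in>E. fst e \<noteq> l \<and> snd e \<noteq> l} r"
      using less.hyps R(1) less.prems(2) ln(2) by auto
    obtain e0 where e0: "e0 = (n, l) \<or> e0 = (l, n)" "E = insert e0 {e\<in>E. fst e \<noteq> l \<and> snd e \<noteq> l}"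
      using R(3) by blast
    have "rtree (insert l (V - {l})) (insert e0 {e\<in>E. fst e \<noteq> l \<and> snd e \<noteq> l}) r"
      by (rule rtree_insert_leaf[OF rt R(2) _ e0(1)]) auto
    then show ?thesis using e0(2) ln(1) by (simp add: insert_absorb)
  qed
qed



lemma GoodI:
  assumes "\<forall>e\<in>E. fst e \<in> V \<and> snd e \<in> V \<and> y (fst e) < y (snd e)"
    "inj_on (\<lambda>w. (x w, y w)) V"
    "\<forall>e\<in>E. \<forall>w\<in>V. y (fst e) < y w \<and> y w < y (snd e) \<longrightarrow> lane e \<noteq> x w"
    "\<forall>e\<in>E. \<forall>e'\<in>E. e \<noteq> e' \<longrightarrow> (\<forall>k. y (fst e) < k \<and> k < y (snd e) \<and> y (fst e') < k \<and> k < y (snd e')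
        \<longrightarrow> lane e \<noteq> lane e')"
    "\<forall>e\<in>E. \<forall>e'\<in>E. e \<noteq> e' \<longrightarrow> (\<forall>k. y (fst e) \<le> k \<and> k + 1 \<le> y (snd e) \<and> y (fst e') \<le> k \<and> k + 1 \<le> y (snd e')
        \<longrightarrow> (pt x y lane e k - pt x y lane e' k) * (pt x y lane e (k+1) - pt x y lane e' (k+1)) \<ge> 0)"
  shows "Good V E x y lane"
  using assms unfolding Good_def by blast

lemma pt_fst[simp]: "pt x y lane e (y (fst e)) = x (fst e)" by (simp add: pt_def)
lemma pt_snd: "y (fst e) < y (snd e) \<Longrightarrow> pt x y lane e (y (snd e)) = x (snd e)" by (simp add: pt_def)
lemma pt_mid: "k \<noteq> y (fst e) \<Longrightarrow> k \<noteq> y (snd e) \<Longrightarrow> pt x y lane e k = lane e" by (simp add: pt_def)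
lemma pt_cases: "P (x (fst e)) \<Longrightarrow> P (x (snd e)) \<Longrightarrow> P (lane e) \<Longrightarrow> P (pt x y lane e k)"
  by (simp add: pt_def)

lemma prod_nonneg: "(a \<le> b \<and> c \<le> d) \<or> (b \<le> a \<and> d \<le> c) \<Longrightarrow> (a - b) * (c - d) \<ge> (0::real)"
  by (auto intro: mult_nonpos_nonpos mult_nonneg_nonneg)

lemma Good_empty: "Good {r} {} x y lane"
  by (rule GoodI) auto

lemma Good_cong:
  assumes G: "Good V E x y lane" and cx: "\<forall>w\<in>V. x' w = x w" and cy: "\<forall>w\<in>V. y' w = y w"
    and cl: "\<forall>e\<in>E. lane' e = lane e"
  shows "Good V E x' y' lane'"
proof -
  have ends: "fst e \<in> V" "snd e \<in> V" if "e \<in> E" for e using GoodD0[OF G that] by auto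
  have ptc: "pt x' y' lane' e k = pt x y lane e k" if "e \<in> E" for e k
    using ends[OF that] cx cy cl that by (simp add: pt_def)
  show ?thesis
  proof (rule GoodI)
    show "\<forall>e\<in>E. fst e \<in> V \<and> snd e \<in> V \<and> y' (fst e) < y' (snd e)"
      using GoodD0[OF G] ends cy by auto
    show "inj_on (\<lambda>w. (x' w, y' w)) V"
      using GoodD1[OF G] cx cy unfolding inj_on_def by auto
    show "\<forall>e\<in>E. \<forall>w\<in>V. y' (fst e) < y' w \<and> y' w < y' (snd e) \<longrightarrow> lane' e \<noteq> x' w"
      using GoodD2[OF G] ends cx cy cl by auto
    show "\<forall>e\<in>E. \<forall>e'\<in>E. e \<noteq> e' \<longrightarrow> (\<forall>k. y' (fst e) < k \<and> k < y' (snd e) \<and> y' (fst e') < k \<and> k < y' (snd e')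
        \<longrightarrow> lane' e \<noteq> lane' e')"
    proof (intro ballI impI allI)
      fix e e' k assume e: "e \<in> E" and e': "e' \<in> E" and ne: "e \<noteq> e'"
        and h: "y' (fst e) < k \<and> k < y' (snd e) \<and> y' (fst e') < k \<and> k < y' (snd e')"
      have "y (fst e) < k \<and> k < y (snd e) \<and> y (fst e') < k \<and> k < y (snd e')" using h ends[OF e] ends[OF e'] cy by auto
      then have "lane e \<noteq> lane e'" using GoodD3[OF G e e' ne] by blast
      then show "lane' e \<noteq> lane' e'" using cl e e' by simp
    qed
    show "\<forall>e\<in>E. \<forall>e'\<in>E. e \<noteq> e' \<longrightarrow> (\<forall>k. y' (fst e) \<le> k \<and> k + 1 \<le> y' (snd e) \<and> y' (fst e') \<le> k \<and> k + 1 \<le> y' (snd e')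
        \<longrightarrow> (pt x' y' lane' e k - pt x' y' lane' e' k) * (pt x' y' lane' e (k+1) - pt x' y' lane' e' (k+1)) \<ge> 0)"
      using GoodD4[OF G] ends cy ptc by auto
  qed
qed

lemma Good_translate:
  assumes G: "Good V E x y lane"
  shows "Good V E (\<lambda>w. x w + t) y (\<lambda>e. lane e + t)"
proof -
  have ptc: "pt (\<lambda>w. x w + t) y (\<lambda>e. lane e + t) e k = pt x y lane e k + t" for e k
    by (simp add: pt_def)
  show ?thesis
  proof (rule GoodI)
    show "\<forall>e\<in>E. fst e \<in> V \<and> snd e \<in> V \<and> y (fst e) < y (snd e)"
      using GoodD0[OF G] by auto
    show "inj_on (\<lambda>w. (x w + t, y w)) V"
      using GoodD1[OF G] unfolding inj_on_def by auto
    show "\<forall>e\<in>E. \<forall>w\<in>V. y (fst e) < y w \<and> y w < y (snd e) \<longrightarrow> lane e + t \<noteq> x w + t"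
      using GoodD2[OF G] by auto
    show "\<forall>e\<in>E. \<forall>e'\<in>E. e \<noteq> e' \<longrightarrow> (\<forall>k. y (fst e) < k \<and> k < y (snd e) \<and> y (fst e') < k \<and> k < y (snd e')
        \<longrightarrow> lane e + t \<noteq> lane e' + t)"
      using GoodD3[OF G] by (meson add_right_cancel)
    show "\<forall>e\<in>E. \<forall>e'\<in>E. e \<noteq> e' \<longrightarrow> (\<forall>k. y (fst e) \<le> k \<and> k + 1 \<le> y (snd e) \<and> y (fst e') \<le> k \<and> k + 1 \<le> y (snd e')
        \<longrightarrow> (pt (\<lambda>w. x w + t) y (\<lambda>e. lane e + t) e k - pt (\<lambda>w. x w + t) y (\<lambda>e. lane e + t) e' k) *
            (pt (\<lambda>w. x w + t) y (\<lambda>e. lane e + t) e (k+1) - pt (\<lambda>w. x w + t) y (\<lambda>e. lane e + t) e' (k+1)) \<ge> 0)"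
      unfolding ptc using GoodD4[OF G] by auto
  qed
qed

lemma pt_lt:
  assumes "fst e \<in> V" "snd e \<in> V" "\<forall>w\<in>V. x w < m" "lane e < m"
  shows "pt x y lane e k < m"
  using assms by (intro pt_cases[where P="\<lambda>v. v < m"]) auto

lemma pt_gt:
  assumes "fst e \<in> V" "snd e \<in> V" "\<forall>w\<in>V. x w > m" "lane e > m"
  shows "pt x y lane e k > m"
  using assms by (intro pt_cases[where P="\<lambda>v. v > m"]) auto

lemma Good_union:
  assumes G1: "Good V1 E1 x y lane" and G2: "Good V2 E2 x y lane" and dj: "V1 \<inter> V2 = {}"
    and b1: "\<forall>w\<in>V1. x w < m" "\<forall>e\<in>E1. lane e < m"
    and b2: "\<forall>w\<in>V2. x w > m" "\<forall>e\<in>E2. lane e > m"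
  shows "Good (V1 \<union> V2) (E1 \<union> E2) x y lane"
proof -
  have ends1: "fst e \<in> V1" "snd e \<in> V1" if "e \<in> E1" for e using GoodD0[OF G1 that] by auto
  have ends2: "fst e \<in> V2" "snd e \<in> V2" if "e \<in> E2" for e using GoodD0[OF G2 that] by auto
  have p1: "pt x y lane e k < m" if "e \<in> E1" for e k using pt_lt[OF ends1[OF that] b1(1)] b1(2) that by auto
  have p2: "pt x y lane e k > m" if "e \<in> E2" for e k using pt_gt[OF ends2[OF that] b2(1)] b2(2) that by auto
  have dE: "e \<notin> E2" if "e \<in> E1" for e using ends1[OF that] ends2 dj by blast
  show ?thesis
  proof (rule GoodI)
    show "\<forall>e\<in>E1 \<union> E2. fst e \<in> V1 \<union> V2 \<and> snd e \<in> V1 \<union> V2 \<and> y (fst e) < y (snd e)"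
      using GoodD0[OF G1] GoodD0[OF G2] by auto
    show "inj_on (\<lambda>w. (x w, y w)) (V1 \<union> V2)"
    proof (rule inj_onI)
      fix a b assume a: "a \<in> V1 \<union> V2" and b: "b \<in> V1 \<union> V2" and eq: "(x a, y a) = (x b, y b)"
      show "a = b"
      proof (cases "a \<in> V1")
        case True
        show ?thesis
        proof (cases "b \<in> V1")
          case True
          then show ?thesis using \<open>a \<in> V1\<close> eq GoodD1[OF G1] unfolding inj_on_def by blast
        next
          case False
          then have "b \<in> V2" using b by auto
          then show ?thesis using \<open>a \<in> V1\<close> eq b1 b2 by force
        qed
      next
        case False
        then have a2: "a \<in> V2" using a by auto
        show ?thesis
        proof (cases "b \<in> V1")
          case True
          then show ?thesis using a2 eq b1 b2 by force
        next
          case False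
          then show ?thesis using a2 b eq GoodD1[OF G2] unfolding inj_on_def by blast
        qed
      qed
    qed
    show "\<forall>e\<in>E1 \<union> E2. \<forall>w\<in>V1 \<union> V2. y (fst e) < y w \<and> y w < y (snd e) \<longrightarrow> lane e \<noteq> x w"
    proof (intro ballI impI)
      fix e w assume e: "e \<in> E1 \<union> E2" and w: "w \<in> V1 \<union> V2" and h: "y (fst e) < y w \<and> y w < y (snd e)"
      show "lane e \<noteq> x w"
      proof (cases "e \<in> E1")
        case True
        then show ?thesis
        proof (cases "w \<in> V1")
          case True
          then show ?thesis using GoodD2[OF G1 \<open>e \<in> E1\<close> True] h by auto
        next
          case False
          then show ?thesis using w \<open>e \<in> E1\<close> b1 b2 by force
        qed
      next
        case False
        then have e2: "e \<in> E2" using e by auto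
        then show ?thesis
        proof (cases "w \<in> V2")
          case True
          then show ?thesis using GoodD2[OF G2 e2 True] h by auto
        next
          case False
          then show ?thesis using w e2 b1 b2 by force
        qed
      qed
    qed
    show "\<forall>e\<in>E1 \<union> E2. \<forall>e'\<in>E1 \<union> E2. e \<noteq> e' \<longrightarrow> (\<forall>k. y (fst e) < k \<and> k < y (snd e) \<and> y (fst e') < k \<and> k < y (snd e')
        \<longrightarrow> lane e \<noteq> lane e')"
    proof (intro ballI impI allI)
      fix e e' k assume e: "e \<in> E1 \<union> E2" and e': "e' \<in> E1 \<union> E2" and ne: "e \<noteq> e'"
        and h: "y (fst e) < k \<and> k < y (snd e) \<and> y (fst e') < k \<and> k < y (snd e')"
      show "lane e \<noteq> lane e'"
      proof (cases "e \<in> E1")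
        case True
        show ?thesis
        proof (cases "e' \<in> E1")
          case True
          then show ?thesis using GoodD3[OF G1 \<open>e \<in> E1\<close> True ne] h by auto
        next
          case False
          then show ?thesis using e' \<open>e \<in> E1\<close> b1 b2 by force
        qed
      next
        case False
        then have e2: "e \<in> E2" using e by auto
        show ?thesis
        proof (cases "e' \<in> E2")
          case True
          then show ?thesis using GoodD3[OF G2 e2 True ne] h by auto
        next
          case False
          then show ?thesis using e' e2 b1 b2 by force
        qed
      qed
    qed
    show "\<forall>e\<in>E1 \<union> E2. \<forall>e'\<in>E1 \<union> E2. e \<noteq> e' \<longrightarrow> (\<forall>k. y (fst e) \<le> k \<and> k + 1 \<le> y (snd e) \<and> y (fst e') \<le> k \<and> k + 1 \<le> y (snd e')
        \<longrightarrow> (pt x y lane e k - pt x y lane e' k) * (pt x y lane e (k+1) - pt x y lane e' (k+1)) \<ge> 0)"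
    proof (intro ballI impI allI)
      fix e e' k assume e: "e \<in> E1 \<union> E2" and e': "e' \<in> E1 \<union> E2" and ne: "e \<noteq> e'"
        and h: "y (fst e) \<le> k \<and> k + 1 \<le> y (snd e) \<and> y (fst e') \<le> k \<and> k + 1 \<le> y (snd e')"
      show "(pt x y lane e k - pt x y lane e' k) * (pt x y lane e (k+1) - pt x y lane e' (k+1)) \<ge> 0"
      proof (cases "e \<in> E1")
        case True
        show ?thesis
        proof (cases "e' \<in> E1")
          case True
          then show ?thesis using GoodD4[OF G1 \<open>e \<in> E1\<close> True ne] h by auto
        next
          case False
          then have "e' \<in> E2" using e' by auto
          then show ?thesis using p1[OF \<open>e \<in> E1\<close>] p2[OF \<open>e' \<in> E2\<close>]
            by (intro prod_nonneg) (meson less_imp_le order.strict_trans)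
        qed
      next
        case False
        then have e2: "e \<in> E2" using e by auto
        show ?thesis
        proof (cases "e' \<in> E2")
          case True
          then show ?thesis using GoodD4[OF G2 e2 True ne] h by auto
        next
          case False
          then have "e' \<in> E1" using e' by auto
          then show ?thesis using p1[OF \<open>e' \<in> E1\<close>] p2[OF e2]
            by (intro prod_nonneg) (meson less_imp_le order.strict_trans)
        qed
      qed
    qed
  qed
qed

lemma Good_add:
  assumes G: "Good V E x y lane" and nin: "e0 \<notin> E"
    and ends: "fst e0 \<in> V" "snd e0 \<in> V" "y (fst e0) < y (snd e0)"
    and c2: "\<forall>w\<in>V. y (fst e0) < y w \<and> y w < y (snd e0) \<longrightarrow> lane e0 \<noteq> x w"
    and c3: "\<forall>e\<in>E. \<forall>k. y (fst e0) < k \<and> k < y (snd e0) \<and> y (fst e) < k \<and> k < y (snd e) \<longrightarrow> lane e0 \<noteq> lane e"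
    and c4: "\<forall>e\<in>E. \<forall>k. y (fst e0) \<le> k \<and> k + 1 \<le> y (snd e0) \<and> y (fst e) \<le> k \<and> k + 1 \<le> y (snd e)
        \<longrightarrow> (pt x y lane e0 k - pt x y lane e k) * (pt x y lane e0 (k+1) - pt x y lane e (k+1)) \<ge> 0"
  shows "Good V (insert e0 E) x y lane"
proof (rule GoodI)
  show "\<forall>e\<in>insert e0 E. fst e \<in> V \<and> snd e \<in> V \<and> y (fst e) < y (snd e)"
    using GoodD0[OF G] ends by auto
  show "inj_on (\<lambda>w. (x w, y w)) V" using GoodD1[OF G] .
  show "\<forall>e\<in>insert e0 E. \<forall>w\<in>V. y (fst e) < y w \<and> y w < y (snd e) \<longrightarrow> lane e \<noteq> x w"
    using GoodD2[OF G] c2 by auto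
  show "\<forall>e\<in>insert e0 E. \<forall>e'\<in>insert e0 E. e \<noteq> e' \<longrightarrow> (\<forall>k. y (fst e) < k \<and> k < y (snd e) \<and> y (fst e') < k \<and> k < y (snd e')
        \<longrightarrow> lane e \<noteq> lane e')"
    using GoodD3[OF G] c3 by fastforce
  show "\<forall>e\<in>insert e0 E. \<forall>e'\<in>insert e0 E. e \<noteq> e' \<longrightarrow> (\<forall>k. y (fst e) \<le> k \<and> k + 1 \<le> y (snd e) \<and> y (fst e') \<le> k \<and> k + 1 \<le> y (snd e')
        \<longrightarrow> (pt x y lane e k - pt x y lane e' k) * (pt x y lane e (k+1) - pt x y lane e' (k+1)) \<ge> 0)"
  proof (intro ballI impI allI)
    fix e e' k assume e: "e \<in> insert e0 E" and e': "e' \<in> insert e0 E" and ne: "e \<noteq> e'"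
      and h: "y (fst e) \<le> k \<and> k + 1 \<le> y (snd e) \<and> y (fst e') \<le> k \<and> k + 1 \<le> y (snd e')"
    show "(pt x y lane e k - pt x y lane e' k) * (pt x y lane e (k+1) - pt x y lane e' (k+1)) \<ge> 0"
    proof (cases "e = e0")
      case True
      then have "e' \<in> E" using e' ne by auto
      then show ?thesis using c4 h True by auto
    next
      case False
      then have eE: "e \<in> E" using e by auto
      show ?thesis
      proof (cases "e' = e0")
        case True
        have "(pt x y lane e0 k - pt x y lane e k) * (pt x y lane e0 (k+1) - pt x y lane e (k+1)) \<ge> 0"
          using c4 eE h True by auto
        then show ?thesis using True by (simp add: algebra_simps)
      next
        case False
        then show ?thesis using GoodD4[OF G eE _ ne] e' h by auto
      qed
    qed
  qed
qed



lemma pt_nsnd: "k \<noteq> y (snd e) \<Longrightarrow> pt x y lane e k = x (fst e) \<or> pt x y lane e k = lane e"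
  by (auto simp: pt_def)

lemma pt_any: "pt x y lane e k = x (fst e) \<or> pt x y lane e k = x (snd e) \<or> pt x y lane e k = lane e"
  by (auto simp: pt_def)

lemma pt_up: "y (fst e) < k \<Longrightarrow> k \<le> y (snd e) \<Longrightarrow> x (snd e) = lane e \<Longrightarrow> pt x y lane e k = lane e"
  by (auto simp: pt_def)

lemma pt_low: "y (fst e) < k \<Longrightarrow> k < y (snd e) \<Longrightarrow> pt x y lane e k = lane e"
  by (auto simp: pt_def)

lemma src_step:
  assumes G: "Good (V1 \<union> V2) (E1 \<union> E2) x y lane"
    and dj: "V1 \<inter> V2 = {}" and rV: "r \<in> V1" and cV: "c \<in> V2"
    and E1V: "E1 \<subseteq> V1 \<times> V1" and E2V: "E2 \<subseteq> V2 \<times> V2"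
    and yr: "y r = Y" and above1: "\<forall>w\<in>V1. w \<noteq> r \<longrightarrow> y w > Y"
    and b1: "\<forall>w\<in>V1. x w < x c" "\<forall>e\<in>E1. lane e < x c"
    and above2: "\<forall>w\<in>V2. y w > Y"
    and side: "\<forall>w\<in>V2. w \<noteq> c \<longrightarrow> x w \<noteq> x c"
    and sideE: "\<forall>e\<in>E2. (x (fst e) > x c \<and> x (snd e) > x c \<and> lane e > x c) \<or>
        (x (fst e) < x c \<and> x (snd e) < x c \<and> lane e < x c) \<or>
        (snd e = c \<and> x (fst e) > x c \<and> lane e > x c) \<or> (snd e = c \<and> x (fst e) < x c \<and> lane e < x c)"
    and ln0: "lane (r, c) = x c"
  shows "Good (V1 \<union> V2) (insert (r, c) (E1 \<union> E2)) x y lane"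
proof -
  have yc: "y c > Y" using above2 cV by auto
  have pt0: "pt x y lane (r, c) k = x c" if "Y < k" "k \<le> y c" for k
    using that yr ln0 by (auto simp: pt_def)
  show ?thesis
  proof (rule Good_add[OF G])
    show "(r, c) \<notin> E1 \<union> E2" using E1V E2V dj rV cV by auto
    show "fst (r, c) \<in> V1 \<union> V2" "snd (r, c) \<in> V1 \<union> V2" "y (fst (r, c)) < y (snd (r, c))"
      using rV cV yr yc by auto
    show "\<forall>w\<in>V1 \<union> V2. y (fst (r, c)) < y w \<and> y w < y (snd (r, c)) \<longrightarrow> lane (r, c) \<noteq> x w"
      using b1 side ln0 by force
    show "\<forall>e\<in>E1 \<union> E2. \<forall>k. y (fst (r, c)) < k \<and> k < y (snd (r, c)) \<and> y (fst e) < k \<and> k < y (snd e) \<longrightarrow>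
          lane (r, c) \<noteq> lane e"
      using b1 sideE ln0 by force
    show "\<forall>e\<in>E1 \<union> E2. \<forall>k. y (fst (r, c)) \<le> k \<and> k + 1 \<le> y (snd (r, c)) \<and> y (fst e) \<le> k \<and> k + 1 \<le> y (snd e) \<longrightarrow>
          0 \<le> (pt x y lane (r, c) k - pt x y lane e k) * (pt x y lane (r, c) (k + 1) - pt x y lane e (k + 1))"
    proof (intro ballI allI impI)
      fix e k assume e: "e \<in> E1 \<union> E2"
        and h: "y (fst (r, c)) \<le> k \<and> k + 1 \<le> y (snd (r, c)) \<and> y (fst e) \<le> k \<and> k + 1 \<le> y (snd e)"
      have hk: "Y \<le> k" "k + 1 \<le> y c" "y (fst e) \<le> k" "k + 1 \<le> y (snd e)" using h yr by auto
      show "0 \<le> (pt x y lane (r, c) k - pt x y lane e k) * (pt x y lane (r, c) (k + 1) - pt x y lane e (k + 1))"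
      proof (cases "e \<in> E1")
        case True
        have fe: "fst e \<in> V1" "snd e \<in> V1" using True E1V by auto
        show ?thesis
        proof (cases "k = Y")
          case True
          then have "fst e = r" using above1 fe hk by force
          then have "pt x y lane e k = pt x y lane (r, c) k" using True yr by (simp add: pt_def)
          then show ?thesis by simp
        next
          case False
          then have kY: "Y < k" using hk by simp
          have a: "pt x y lane (r, c) k = x c" "pt x y lane (r, c) (k+1) = x c" using pt0 kY hk by auto
          have "pt x y lane e k < x c" "pt x y lane e (k+1) < x c"
            using pt_lt[of e V1 x "x c" lane y] fe b1 \<open>e \<in> E1\<close> by auto
          then show ?thesis unfolding a by (intro prod_nonneg) auto
        qed
      next
        case False
        then have e2: "e \<in> E2" using e by auto
        have fe: "fst e \<in> V2" "snd e \<in> V2" using e2 E2V by auto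
        have kY: "Y < k" using above2 fe hk by force
        have a: "pt x y lane (r, c) k = x c" "pt x y lane (r, c) (k+1) = x c" using pt0 kY hk by auto
        have ks: "k \<noteq> y (snd e)" using hk by simp
        consider "x (fst e) > x c \<and> x (snd e) > x c \<and> lane e > x c"
          | "x (fst e) < x c \<and> x (snd e) < x c \<and> lane e < x c"
          | "snd e = c \<and> x (fst e) > x c \<and> lane e > x c" | "snd e = c \<and> x (fst e) < x c \<and> lane e < x c"
          using sideE e2 by blast
        then show ?thesis
        proof cases
          case 1
          then have "pt x y lane e k > x c" "pt x y lane e (k+1) > x c"
            using pt_any[of x y lane e k] pt_any[of x y lane e "k+1"] by auto
          then show ?thesis unfolding a by (intro prod_nonneg) auto
        next
          case 2
          then have "pt x y lane e k < x c" "pt x y lane e (k+1) < x c"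
            using pt_any[of x y lane e k] pt_any[of x y lane e "k+1"] by auto
          then show ?thesis unfolding a by (intro prod_nonneg) auto
        next
          case 3
          then have "pt x y lane e k > x c" "pt x y lane e (k+1) \<ge> x c"
            using pt_nsnd[where k=k and y=y and e=e and x=x and lane=lane, OF ks] pt_any[of x y lane e "k+1"] by auto
          then show ?thesis unfolding a by (intro prod_nonneg) auto
        next
          case 4
          then have "pt x y lane e k < x c" "pt x y lane e (k+1) \<le> x c"
            using pt_nsnd[where k=k and y=y and e=e and x=x and lane=lane, OF ks] pt_any[of x y lane e "k+1"] by auto
          then show ?thesis unfolding a by (intro prod_nonneg) auto
        qed
      qed
    qed
  qed
qed


lemma inv_bounds: "0 < 1 / (real i + 2)" "1 / (real i + 2) < 1" "1 / (real i + 2) < 1 / (real i + 1)"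
  by (auto simp: divide_simps)

lemma snk_right_step:
  assumes G: "Good (V1 \<union> V2) (E1 \<union> E2) x y lane"
    and dj: "V1 \<inter> V2 = {}" and rV: "r \<in> V1" and uV: "u \<in> V2"
    and E1V: "E1 \<subseteq> V1 \<times> V1" and E2V: "E2 \<subseteq> V2 \<times> V2"
    and yr: "y r = Y"
    and sep1: "\<forall>w\<in>V1. w \<noteq> r \<longrightarrow> x w \<ge> x r + 1 \<or> x w \<le> x r - 1"
    and lvR: "\<forall>w\<in>V1. x w > x r \<longrightarrow> y w \<ge> Y - int iR"
    and E1c: "\<forall>e\<in>E1. (x (fst e) \<ge> x r + 1 \<and> x (snd e) \<ge> x r + 1 \<and> lane e \<ge> x r + 1) \<or>
        (x (fst e) \<le> x r - 1 \<and> x (snd e) \<le> x r - 1 \<and> lane e \<le> x r - 1) \<or>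
        (snd e = r \<and> x (fst e) \<ge> x r + 1 \<and> x r + 1 / (real iR + 1) \<le> lane e) \<or>
        (snd e = r \<and> x (fst e) \<le> x r - 1 \<and> lane e < x r)"
    and yu: "y u = Y - int iR - 1" and above2: "\<forall>w\<in>V2. w \<noteq> u \<longrightarrow> y w > y u"
    and b2: "\<forall>w\<in>V2. x w \<ge> x r + 1" "\<forall>e\<in>E2. lane e \<ge> x r + 1"
    and ln0: "lane (u, r) = x r + 1 / (real iR + 2)"
  shows "Good (V1 \<union> V2) (insert (u, r) (E1 \<union> E2)) x y lane"
proof -
  note ib = inv_bounds[of iR]
  define l0 where "l0 = lane (u, r)"
  have l0b: "x r < l0" "l0 < x r + 1" "l0 < x r + 1 / (real iR + 1)" using ib ln0 unfolding l0_def by auto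
  have xu: "x u \<ge> x r + 1" using b2 uV by auto
  have pt0: "pt x y lane (u, r) k \<le> l0" "pt x y lane (u, r) k \<ge> x r" if "y u < k" "k \<le> Y" for k
    using that yr l0b unfolding l0_def by (auto simp: pt_def)
  have pt0m: "pt x y lane (u, r) k = l0" if "y u < k" "k < Y" for k
    using that yr unfolding l0_def by (auto simp: pt_def)
  have pt0t: "pt x y lane (u, r) Y = x r" using yr yu by (auto simp: pt_def)
  have pt0all: "pt x y lane (u, r) k \<ge> x r" for k
    using xu l0b unfolding l0_def by (auto simp: pt_def)
  show ?thesis
  proof (rule Good_add[OF G])
    show "(u, r) \<notin> E1 \<union> E2" using E1V E2V dj rV uV by auto
    show "fst (u, r) \<in> V1 \<union> V2" "snd (u, r) \<in> V1 \<union> V2" "y (fst (u, r)) < y (snd (u, r))"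
      using rV uV yr yu by auto
    show "\<forall>w\<in>V1 \<union> V2. y (fst (u, r)) < y w \<and> y w < y (snd (u, r)) \<longrightarrow> lane (u, r) \<noteq> x w"
    proof (intro ballI impI)
      fix w assume w: "w \<in> V1 \<union> V2" and h: "y (fst (u, r)) < y w \<and> y w < y (snd (u, r))"
      have "w \<noteq> r" using h yr by auto
      then show "lane (u, r) \<noteq> x w" using w sep1 b2 l0b unfolding l0_def by force
    qed
    show "\<forall>e\<in>E1 \<union> E2. \<forall>k. y (fst (u, r)) < k \<and> k < y (snd (u, r)) \<and> y (fst e) < k \<and> k < y (snd e) \<longrightarrow>
          lane (u, r) \<noteq> lane e"
    proof (intro ballI allI impI)
      fix e k assume e: "e \<in> E1 \<union> E2"
      show "lane (u, r) \<noteq> lane e"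
      proof (cases "e \<in> E1")
        case True
        then show ?thesis using E1c l0b unfolding l0_def by force
      next
        case False
        then show ?thesis using e b2 l0b unfolding l0_def by force
      qed
    qed
    show "\<forall>e\<in>E1 \<union> E2. \<forall>k. y (fst (u, r)) \<le> k \<and> k + 1 \<le> y (snd (u, r)) \<and> y (fst e) \<le> k \<and> k + 1 \<le> y (snd e) \<longrightarrow>
          0 \<le> (pt x y lane (u, r) k - pt x y lane e k) * (pt x y lane (u, r) (k + 1) - pt x y lane e (k + 1))"
    proof (intro ballI allI impI)
      fix e k assume e: "e \<in> E1 \<union> E2"
        and h: "y (fst (u, r)) \<le> k \<and> k + 1 \<le> y (snd (u, r)) \<and> y (fst e) \<le> k \<and> k + 1 \<le> y (snd e)"
      have hk: "y u \<le> k" "k + 1 \<le> Y" "y (fst e) \<le> k" "k + 1 \<le> y (snd e)" using h yr by auto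
      have ks: "k \<noteq> y (snd e)" using hk by simp
      show "0 \<le> (pt x y lane (u, r) k - pt x y lane e k) * (pt x y lane (u, r) (k + 1) - pt x y lane e (k + 1))"
      proof (cases "e \<in> E1")
        case False
        then have e2: "e \<in> E2" using e by auto
        have fe: "fst e \<in> V2" "snd e \<in> V2" using e2 E2V by auto
        show ?thesis
        proof (cases "k = y u")
          case True
          then have "fst e = u" using above2 fe hk by force
          then have "pt x y lane e k = pt x y lane (u, r) k" using True by (simp add: pt_def)
          then show ?thesis by simp
        next
          case False
          then have ku: "y u < k" using hk by simp
          have a: "pt x y lane (u, r) k \<le> l0" "pt x y lane (u, r) (k+1) \<le> l0" using pt0 ku hk by auto
          have "pt x y lane e k \<ge> x r + 1" "pt x y lane e (k+1) \<ge> x r + 1"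
            using pt_any[of x y lane e k] pt_any[of x y lane e "k+1"] b2 fe e2 by auto
          then show ?thesis using a l0b by (intro prod_nonneg) auto
        qed
      next
        case True
        have fe: "fst e \<in> V1" "snd e \<in> V1" using True E1V by auto
        consider "x (fst e) \<ge> x r + 1 \<and> x (snd e) \<ge> x r + 1 \<and> lane e \<ge> x r + 1"
          | "x (fst e) \<le> x r - 1 \<and> x (snd e) \<le> x r - 1 \<and> lane e \<le> x r - 1"
          | "snd e = r \<and> x (fst e) \<ge> x r + 1 \<and> x r + 1 / (real iR + 1) \<le> lane e"
          | "snd e = r \<and> x (fst e) \<le> x r - 1 \<and> lane e < x r"
          using E1c True by blast
        then show ?thesis
        proof cases
          case 1
          have "y (fst e) \<ge> Y - int iR" using lvR fe 1 by force
          then have ku: "y u < k" using hk yu by linarith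
          have a: "pt x y lane (u, r) k \<le> l0" "pt x y lane (u, r) (k+1) \<le> l0" using pt0 ku hk by auto
          have "pt x y lane e k \<ge> x r + 1" "pt x y lane e (k+1) \<ge> x r + 1"
            using pt_any[of x y lane e k] pt_any[of x y lane e "k+1"] 1 by auto
          then show ?thesis using a l0b by (intro prod_nonneg) auto
        next
          case 2
          have "pt x y lane e k \<le> x r - 1" "pt x y lane e (k+1) \<le> x r - 1"
            using pt_any[of x y lane e k] pt_any[of x y lane e "k+1"] 2 by auto
          then show ?thesis using pt0all[of k] pt0all[of "k+1"] by (intro prod_nonneg) auto
        next
          case 3
          have "y (fst e) \<ge> Y - int iR" using lvR fe 3 by force
          then have ku: "y u < k" using hk yu by linarith
          have kY: "k < Y" using hk by simp
          have a: "pt x y lane (u, r) k = l0" using pt0m ku kY by auto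
          have b: "pt x y lane e k > l0"
            using pt_nsnd[where k=k and y=y and e=e and x=x and lane=lane, OF ks] 3 l0b by auto
          have c: "pt x y lane (u, r) (k+1) \<le> pt x y lane e (k+1)"
          proof (cases "k + 1 = Y")
            case True
            then have "pt x y lane e (k+1) = x r" "pt x y lane (u, r) (k+1) = x r"
              using 3 yr hk pt0t by (auto simp: pt_def)
            then show ?thesis by simp
          next
            case False
            then have "pt x y lane e (k+1) = lane e" "pt x y lane (u, r) (k+1) = l0"
              using 3 yr hk pt0m[of "k+1"] ku by (auto simp: pt_def)
            then show ?thesis using 3 l0b by simp
          qed
          show ?thesis using a b c by (intro prod_nonneg) auto
        next
          case 4
          have kY: "k < Y" using hk by simp
          have a: "pt x y lane e k < x r"
            using pt_nsnd[where k=k and y=y and e=e and x=x and lane=lane, OF ks] 4 by auto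
          have b: "pt x y lane e (k+1) \<le> x r"
            using pt_any[of x y lane e "k+1"] 4 by auto
          show ?thesis using a b pt0all[of k] pt0all[of "k+1"] by (intro prod_nonneg) auto
        qed
      qed
    qed
  qed
qed

lemma snk_left_step:
  assumes G: "Good (V1 \<union> V2) (E1 \<union> E2) x y lane"
    and dj: "V1 \<inter> V2 = {}" and rV: "r \<in> V1" and uV: "u \<in> V2"
    and E1V: "E1 \<subseteq> V1 \<times> V1" and E2V: "E2 \<subseteq> V2 \<times> V2"
    and yr: "y r = Y"
    and sep1: "\<forall>w\<in>V1. w \<noteq> r \<longrightarrow> x w \<ge> x r + 1 \<or> x w \<le> x r - 1"
    and lvR: "\<forall>w\<in>V1. x w < x r \<longrightarrow> y w \<ge> Y - int iR"
    and E1c: "\<forall>e\<in>E1. (x (fst e) \<ge> x r + 1 \<and> x (snd e) \<ge> x r + 1 \<and> lane e \<ge> x r + 1) \<or>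
        (x (fst e) \<le> x r - 1 \<and> x (snd e) \<le> x r - 1 \<and> lane e \<le> x r - 1) \<or>
        (snd e = r \<and> x (fst e) \<le> x r - 1 \<and> lane e \<le> x r - 1 / (real iR + 1)) \<or>
        (snd e = r \<and> x (fst e) \<ge> x r + 1 \<and> lane e > x r)"
    and yu: "y u = Y - int iR - 1" and above2: "\<forall>w\<in>V2. w \<noteq> u \<longrightarrow> y w > y u"
    and b2: "\<forall>w\<in>V2. x w \<le> x r - 1" "\<forall>e\<in>E2. lane e \<le> x r - 1"
    and ln0: "lane (u, r) = x r - 1 / (real iR + 2)"
  shows "Good (V1 \<union> V2) (insert (u, r) (E1 \<union> E2)) x y lane"
proof -
  note ib = inv_bounds[of iR]
  define l0 where "l0 = lane (u, r)"
  have l0b: "l0 < x r" "x r - 1 < l0" "x r - 1 / (real iR + 1) < l0" using ib ln0 unfolding l0_def by auto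
  have xu: "x u \<le> x r - 1" using b2 uV by auto
  have pt0: "pt x y lane (u, r) k \<ge> l0" "pt x y lane (u, r) k \<le> x r" if "y u < k" "k \<le> Y" for k
    using that yr l0b unfolding l0_def by (auto simp: pt_def)
  have pt0m: "pt x y lane (u, r) k = l0" if "y u < k" "k < Y" for k
    using that yr unfolding l0_def by (auto simp: pt_def)
  have pt0t: "pt x y lane (u, r) Y = x r" using yr yu by (auto simp: pt_def)
  have pt0all: "pt x y lane (u, r) k \<le> x r" for k
    using xu l0b unfolding l0_def by (auto simp: pt_def)
  show ?thesis
  proof (rule Good_add[OF G])
    show "(u, r) \<notin> E1 \<union> E2" using E1V E2V dj rV uV by auto
    show "fst (u, r) \<in> V1 \<union> V2" "snd (u, r) \<in> V1 \<union> V2" "y (fst (u, r)) < y (snd (u, r))"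
      using rV uV yr yu by auto
    show "\<forall>w\<in>V1 \<union> V2. y (fst (u, r)) < y w \<and> y w < y (snd (u, r)) \<longrightarrow> lane (u, r) \<noteq> x w"
    proof (intro ballI impI)
      fix w assume w: "w \<in> V1 \<union> V2" and h: "y (fst (u, r)) < y w \<and> y w < y (snd (u, r))"
      have "w \<noteq> r" using h yr by auto
      then show "lane (u, r) \<noteq> x w" using w sep1 b2 l0b unfolding l0_def by force
    qed
    show "\<forall>e\<in>E1 \<union> E2. \<forall>k. y (fst (u, r)) < k \<and> k < y (snd (u, r)) \<and> y (fst e) < k \<and> k < y (snd e) \<longrightarrow>
          lane (u, r) \<noteq> lane e"
    proof (intro ballI allI impI)
      fix e k assume e: "e \<in> E1 \<union> E2"
      show "lane (u, r) \<noteq> lane e"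
      proof (cases "e \<in> E1")
        case True
        then show ?thesis using E1c l0b unfolding l0_def by force
      next
        case False
        then show ?thesis using e b2 l0b unfolding l0_def by force
      qed
    qed
    show "\<forall>e\<in>E1 \<union> E2. \<forall>k. y (fst (u, r)) \<le> k \<and> k + 1 \<le> y (snd (u, r)) \<and> y (fst e) \<le> k \<and> k + 1 \<le> y (snd e) \<longrightarrow>
          0 \<le> (pt x y lane (u, r) k - pt x y lane e k) * (pt x y lane (u, r) (k + 1) - pt x y lane e (k + 1))"
    proof (intro ballI allI impI)
      fix e k assume e: "e \<in> E1 \<union> E2"
        and h: "y (fst (u, r)) \<le> k \<and> k + 1 \<le> y (snd (u, r)) \<and> y (fst e) \<le> k \<and> k + 1 \<le> y (snd e)"
      have hk: "y u \<le> k" "k + 1 \<le> Y" "y (fst e) \<le> k" "k + 1 \<le> y (snd e)" using h yr by auto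
      have ks: "k \<noteq> y (snd e)" using hk by simp
      show "0 \<le> (pt x y lane (u, r) k - pt x y lane e k) * (pt x y lane (u, r) (k + 1) - pt x y lane e (k + 1))"
      proof (cases "e \<in> E1")
        case False
        then have e2: "e \<in> E2" using e by auto
        have fe: "fst e \<in> V2" "snd e \<in> V2" using e2 E2V by auto
        show ?thesis
        proof (cases "k = y u")
          case True
          then have "fst e = u" using above2 fe hk by force
          then have "pt x y lane e k = pt x y lane (u, r) k" using True by (simp add: pt_def)
          then show ?thesis by simp
        next
          case False
          then have ku: "y u < k" using hk by simp
          have a: "pt x y lane (u, r) k \<ge> l0" "pt x y lane (u, r) (k+1) \<ge> l0" using pt0 ku hk by auto
          have "pt x y lane e k \<le> x r - 1" "pt x y lane e (k+1) \<le> x r - 1"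
            using pt_any[of x y lane e k] pt_any[of x y lane e "k+1"] b2 fe e2 by auto
          then show ?thesis using a l0b by (intro prod_nonneg) auto
        qed
      next
        case True
        have fe: "fst e \<in> V1" "snd e \<in> V1" using True E1V by auto
        consider "x (fst e) \<le> x r - 1 \<and> x (snd e) \<le> x r - 1 \<and> lane e \<le> x r - 1"
          | "x (fst e) \<ge> x r + 1 \<and> x (snd e) \<ge> x r + 1 \<and> lane e \<ge> x r + 1"
          | "snd e = r \<and> x (fst e) \<le> x r - 1 \<and> lane e \<le> x r - 1 / (real iR + 1)"
          | "snd e = r \<and> x (fst e) \<ge> x r + 1 \<and> lane e > x r"
          using E1c True by blast
        then show ?thesis
        proof cases
          case 1
          have "y (fst e) \<ge> Y - int iR" using lvR fe 1 by force
          then have ku: "y u < k" using hk yu by linarith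
          have a: "pt x y lane (u, r) k \<ge> l0" "pt x y lane (u, r) (k+1) \<ge> l0" using pt0 ku hk by auto
          have "pt x y lane e k \<le> x r - 1" "pt x y lane e (k+1) \<le> x r - 1"
            using pt_any[of x y lane e k] pt_any[of x y lane e "k+1"] 1 by auto
          then show ?thesis using a l0b by (intro prod_nonneg) auto
        next
          case 2
          have "pt x y lane e k \<ge> x r + 1" "pt x y lane e (k+1) \<ge> x r + 1"
            using pt_any[of x y lane e k] pt_any[of x y lane e "k+1"] 2 by auto
          then show ?thesis using pt0all[of k] pt0all[of "k+1"] by (intro prod_nonneg) auto
        next
          case 3
          have "y (fst e) \<ge> Y - int iR" using lvR fe 3 by force
          then have ku: "y u < k" using hk yu by linarith
          have kY: "k < Y" using hk by simp
          have a: "pt x y lane (u, r) k = l0" using pt0m ku kY by auto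
          have b: "pt x y lane e k < l0"
            using pt_nsnd[where k=k and y=y and e=e and x=x and lane=lane, OF ks] 3 l0b by auto
          have c: "pt x y lane (u, r) (k+1) \<ge> pt x y lane e (k+1)"
          proof (cases "k + 1 = Y")
            case True
            then have "pt x y lane e (k+1) = x r" "pt x y lane (u, r) (k+1) = x r"
              using 3 yr hk pt0t by (auto simp: pt_def)
            then show ?thesis by simp
          next
            case False
            then have "pt x y lane e (k+1) = lane e" "pt x y lane (u, r) (k+1) = l0"
              using 3 yr hk pt0m[of "k+1"] ku by (auto simp: pt_def)
            then show ?thesis using 3 l0b by simp
          qed
          show ?thesis using a b c by (intro prod_nonneg) auto
        next
          case 4
          have kY: "k < Y" using hk by simp
          have a: "pt x y lane e k > x r"
            using pt_nsnd[where k=k and y=y and e=e and x=x and lane=lane, OF ks] 4 by auto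
          have b: "pt x y lane e (k+1) \<ge> x r"
            using pt_any[of x y lane e "k+1"] 4 by auto
          show ?thesis using a b pt0all[of k] pt0all[of "k+1"] by (intro prod_nonneg) auto
        qed
      qed
    qed
  qed
qed




definition SNK :: "'a set \<Rightarrow> ('a \<times> 'a) set \<Rightarrow> 'a \<Rightarrow> ('a \<Rightarrow> real) \<Rightarrow> ('a \<Rightarrow> int) \<Rightarrow> ('a \<times> 'a \<Rightarrow> real) \<Rightarrow> int \<Rightarrow> nat \<Rightarrow> nat \<Rightarrow> bool" where
  "SNK V E r x y lane Y iR iL \<longleftrightarrow> iL \<le> iR \<and> iR \<le> iL + 1 \<and>
    (\<forall>w\<in>V. w \<noteq> r \<longrightarrow> x w \<ge> x r + 1 \<or> x w \<le> x r - 1) \<and>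
    (\<forall>w\<in>V. x w > x r \<longrightarrow> y w \<ge> Y - int iR) \<and> (\<forall>w\<in>V. x w < x r \<longrightarrow> y w \<ge> Y - int iL) \<and>
    (\<forall>e\<in>E. (x (fst e) \<ge> x r + 1 \<and> x (snd e) \<ge> x r + 1 \<and> lane e \<ge> x r + 1) \<or>
         (x (fst e) \<le> x r - 1 \<and> x (snd e) \<le> x r - 1 \<and> lane e \<le> x r - 1) \<or>
         (snd e = r \<and> x (fst e) \<ge> x r + 1 \<and> x r + 1 / (real iR + 1) \<le> lane e) \<or>
         (snd e = r \<and> x (fst e) \<le> x r - 1 \<and> lane e \<le> x r - 1 / (real iL + 1)))"

lemma sub_ends: "E \<subseteq> V \<times> V \<Longrightarrow> e \<in> E \<Longrightarrow> fst e \<in> V \<and> snd e \<in> V"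
  by (cases e) auto

lemma fin_ub:
  assumes "finite A" "finite B"
  shows "\<exists>b::real. (\<forall>a\<in>A. f a \<le> b) \<and> (\<forall>e\<in>B. g e \<le> b)"
proof -
  define b where "b = Max (insert 0 (f ` A \<union> g ` B))"
  have "finite (insert 0 (f ` A \<union> g ` B))" using assms by auto
  then have "(\<forall>a\<in>A. f a \<le> b) \<and> (\<forall>e\<in>B. g e \<le> b)" unfolding b_def by auto
  then show ?thesis by blast
qed

lemma fin_lb:
  assumes "finite A" "finite B"
  shows "\<exists>b::real. (\<forall>a\<in>A. f a \<ge> b) \<and> (\<forall>e\<in>B. g e \<ge> b)"
proof -
  obtain b where "(\<forall>a\<in>A. - f a \<le> b) \<and> (\<forall>e\<in>B. - g e \<le> b)"
    using fin_ub[OF assms, of "\<lambda>a. - f a" "\<lambda>e. - g e"] by blast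
  then have "(\<forall>a\<in>A. f a \<ge> - b) \<and> (\<forall>e\<in>B. g e \<ge> - b)" by force
  then show ?thesis by blast
qed

lemma case_src:
  fixes s :: int
  assumes G1: "Good V1 E1 x1 y1 l1" and yr: "y1 r = Y" and sp1: "\<forall>e\<in>E1. y1 (snd e) - y1 (fst e) \<le> s"
    and ab1: "\<forall>w\<in>V1. w \<noteq> r \<longrightarrow> y1 w > Y"
    and G2: "Good V2 E2 x2 y2 l2" and yc: "y2 c = Y + s" and sp2: "\<forall>e\<in>E2. y2 (snd e) - y2 (fst e) \<le> s"
    and S2: "SNK V2 E2 c x2 y2 l2 (Y + s) iR iL" and iRs: "int iR < s"
    and fin: "finite V1" "finite E1" "finite V2" "finite E2"
    and rV: "r \<in> V1" and cV: "c \<in> V2" and dj: "V1 \<inter> V2 = {}"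
    and E1V: "E1 \<subseteq> V1 \<times> V1" and E2V: "E2 \<subseteq> V2 \<times> V2"
  shows "\<exists>x y lane. Good (V1 \<union> V2) (insert (r, c) (E1 \<union> E2)) x y lane \<and> y r = Y \<and>
     (\<forall>e\<in>insert (r, c) (E1 \<union> E2). y (snd e) - y (fst e) \<le> s) \<and> (\<forall>w\<in>V1 \<union> V2. w \<noteq> r \<longrightarrow> y w > Y)"
proof -
  obtain hi1 where hi1: "\<forall>w\<in>V1. x1 w \<le> hi1" "\<forall>e\<in>E1. l1 e \<le> hi1" using fin_ub[OF fin(1,2)] by blast
  obtain lo2 where lo2: "\<forall>w\<in>V2. x2 w \<ge> lo2" "\<forall>e\<in>E2. l2 e \<ge> lo2" using fin_lb[OF fin(3,4)] by blast
  define t where "t = hi1 - lo2 + 1"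
  define x where "x w = (if w \<in> V1 then x1 w else x2 w + t)" for w
  define y where "y w = (if w \<in> V1 then y1 w else y2 w)" for w
  define lane where "lane e = (if e \<in> E1 then l1 e else if e \<in> E2 then l2 e + t else x2 c + t)" for e
  have nE12: "e \<notin> E1" if "e \<in> E2" for e using that E1V E2V dj by auto
  have nE: "(r, c) \<notin> E1" "(r, c) \<notin> E2" using E1V E2V dj rV cV by auto
  have GA: "Good V1 E1 x y lane" by (rule Good_cong[OF G1]) (auto simp: x_def y_def lane_def)
  have GB: "Good V2 E2 x y lane"
    by (rule Good_cong[OF Good_translate[OF G2, of t]]) (use dj nE12 in \<open>auto simp: x_def y_def lane_def\<close>)
  have bA: "\<forall>w\<in>V1. x w < hi1 + 1/2" "\<forall>e\<in>E1. lane e < hi1 + 1/2" using hi1 by (auto simp: x_def lane_def)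
  have bB: "\<forall>w\<in>V2. x w > hi1 + 1/2" "\<forall>e\<in>E2. lane e > hi1 + 1/2"
    using lo2 dj nE12 by (auto simp: x_def lane_def t_def)
  have GU: "Good (V1 \<union> V2) (E1 \<union> E2) x y lane" by (rule Good_union[OF GA GB dj bA bB])
  obtain sep: "\<forall>w\<in>V2. w \<noteq> c \<longrightarrow> x2 w \<ge> x2 c + 1 \<or> x2 w \<le> x2 c - 1"
    and lv: "\<forall>w\<in>V2. x2 w > x2 c \<longrightarrow> y2 w \<ge> Y + s - int iR" "\<forall>w\<in>V2. x2 w < x2 c \<longrightarrow> y2 w \<ge> Y + s - int iL"
    and ed: "\<forall>e\<in>E2. (x2 (fst e) \<ge> x2 c + 1 \<and> x2 (snd e) \<ge> x2 c + 1 \<and> l2 e \<ge> x2 c + 1) \<or>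
         (x2 (fst e) \<le> x2 c - 1 \<and> x2 (snd e) \<le> x2 c - 1 \<and> l2 e \<le> x2 c - 1) \<or>
         (snd e = c \<and> x2 (fst e) \<ge> x2 c + 1 \<and> x2 c + 1 / (real iR + 1) \<le> l2 e) \<or>
         (snd e = c \<and> x2 (fst e) \<le> x2 c - 1 \<and> l2 e \<le> x2 c - 1 / (real iL + 1))"
    and ii: "iL \<le> iR"
    using S2 unfolding SNK_def by blast
  have lev2: "y2 w > Y" if "w \<in> V2" for w
  proof -
    consider "x2 w > x2 c" | "x2 w < x2 c" | "x2 w = x2 c" by linarith
    then show ?thesis
    proof cases
      case 1 then show ?thesis using lv(1) that iRs by force
    next
      case 2 then show ?thesis using lv(2) that iRs ii by force
    next
      case 3
      then have "w = c" using sep that by force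
      then show ?thesis using yc iRs by simp
    qed
  qed
  have ipos: "0 < 1 / (real i + 1)" for i :: nat by simp
  have xc: "x c = x2 c + t" using cV dj by (auto simp: x_def)
  have "Good (V1 \<union> V2) (insert (r, c) (E1 \<union> E2)) x y lane"
  proof (rule src_step[OF GU dj rV cV E1V E2V])
    show "y r = Y" using rV yr by (simp add: y_def)
    show "\<forall>w\<in>V1. w \<noteq> r \<longrightarrow> Y < y w" using ab1 by (simp add: y_def)
    show "\<forall>w\<in>V1. x w < x c" "\<forall>e\<in>E1. lane e < x c"
      using hi1 lo2 cV xc by (auto simp: x_def lane_def t_def) (smt (verit))+
    show "\<forall>w\<in>V2. Y < y w" using lev2 dj by (auto simp: y_def)
    show "\<forall>w\<in>V2. w \<noteq> c \<longrightarrow> x w \<noteq> x c"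
    proof (intro ballI impI)
      fix w assume w: "w \<in> V2" "w \<noteq> c"
      then have "x w = x2 w + t" using dj by (auto simp: x_def)
      moreover have "x2 w \<ge> x2 c + 1 \<or> x2 w \<le> x2 c - 1" using sep w by blast
      ultimately show "x w \<noteq> x c" unfolding xc by linarith
    qed
    show "\<forall>e\<in>E2. x c < x (fst e) \<and> x c < x (snd e) \<and> x c < lane e \<or>
        x (fst e) < x c \<and> x (snd e) < x c \<and> lane e < x c \<or>
        snd e = c \<and> x c < x (fst e) \<and> x c < lane e \<or> snd e = c \<and> x (fst e) < x c \<and> lane e < x c"
    proof
      fix e assume e: "e \<in> E2"
      have fe: "fst e \<notin> V1" "snd e \<notin> V1" using sub_ends[OF E2V e] dj by blast+
      have le: "lane e = l2 e + t" using e nE12 by (simp add: lane_def)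
      show "x c < x (fst e) \<and> x c < x (snd e) \<and> x c < lane e \<or>
        x (fst e) < x c \<and> x (snd e) < x c \<and> lane e < x c \<or>
        snd e = c \<and> x c < x (fst e) \<and> x c < lane e \<or> snd e = c \<and> x (fst e) < x c \<and> lane e < x c"
      proof -
        have a: "x (fst e) = x2 (fst e) + t" "x (snd e) = x2 (snd e) + t" using fe by (simp_all add: x_def)
        have d: "(x2 (fst e) \<ge> x2 c + 1 \<and> x2 (snd e) \<ge> x2 c + 1 \<and> l2 e \<ge> x2 c + 1) \<or>
         (x2 (fst e) \<le> x2 c - 1 \<and> x2 (snd e) \<le> x2 c - 1 \<and> l2 e \<le> x2 c - 1) \<or>
         (snd e = c \<and> x2 (fst e) \<ge> x2 c + 1 \<and> x2 c + 1 / (real iR + 1) \<le> l2 e) \<or>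
         (snd e = c \<and> x2 (fst e) \<le> x2 c - 1 \<and> l2 e \<le> x2 c - 1 / (real iL + 1))" using ed e by blast
        show ?thesis unfolding a xc le using d ipos[of iR] ipos[of iL] by linarith
      qed
    qed
    show "lane (r, c) = x c" using nE xc by (simp add: lane_def)
  qed
  moreover have "y r = Y" using rV yr by (simp add: y_def)
  moreover have "\<forall>e\<in>insert (r, c) (E1 \<union> E2). y (snd e) - y (fst e) \<le> s"
  proof
    fix e assume e: "e \<in> insert (r, c) (E1 \<union> E2)"
    show "y (snd e) - y (fst e) \<le> s"
    proof (cases "e \<in> E1")
      case True
      then show ?thesis using sp1 sub_ends[OF E1V True] by (simp add: y_def)
    next
      case False
      show ?thesis
      proof (cases "e \<in> E2")
        case True
        then have "fst e \<notin> V1" "snd e \<notin> V1" using sub_ends[OF E2V] dj by blast+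
        then show ?thesis using sp2 True by (simp add: y_def)
      next
        case False
        then have "e = (r, c)" using e \<open>e \<notin> E1\<close> by auto
        then show ?thesis using rV cV dj yr yc by (auto simp: y_def)
      qed
    qed
  qed
  moreover have "\<forall>w\<in>V1 \<union> V2. w \<noteq> r \<longrightarrow> y w > Y"
    using ab1 lev2 dj by (auto simp: y_def)
  ultimately show ?thesis by blast
qed


lemma case_right:
  fixes s :: int
  assumes G1: "Good V1 E1 x1 y1 l1" and yr: "y1 r = Y" and sp1: "\<forall>e\<in>E1. y1 (snd e) - y1 (fst e) \<le> s"
    and S1: "SNK V1 E1 r x1 y1 l1 Y iR iL" and eq: "iR = iL"
    and G2: "Good V2 E2 x2 y2 l2" and yc: "y2 c = Y - int iR - 1" and sp2: "\<forall>e\<in>E2. y2 (snd e) - y2 (fst e) \<le> s"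
    and ab2: "\<forall>w\<in>V2. w \<noteq> c \<longrightarrow> y2 w > y2 c" and rk: "int iR + 1 \<le> s"
    and fin: "finite V1" "finite E1" "finite V2" "finite E2"
    and rV: "r \<in> V1" and cV: "c \<in> V2" and dj: "V1 \<inter> V2 = {}"
    and E1V: "E1 \<subseteq> V1 \<times> V1" and E2V: "E2 \<subseteq> V2 \<times> V2"
  shows "\<exists>x y lane. Good (V1 \<union> V2) (insert (c, r) (E1 \<union> E2)) x y lane \<and> y r = Y \<and>
     (\<forall>e\<in>insert (c, r) (E1 \<union> E2). y (snd e) - y (fst e) \<le> s) \<and>
     SNK (V1 \<union> V2) (insert (c, r) (E1 \<union> E2)) r x y lane Y (Suc iR) iL"
proof -
  obtain hi1 where hi1: "\<forall>w\<in>V1. x1 w \<le> hi1" "\<forall>e\<in>E1. l1 e \<le> hi1" using fin_ub[OF fin(1,2)] by blast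
  obtain lo2 where lo2: "\<forall>w\<in>V2. x2 w \<ge> lo2" "\<forall>e\<in>E2. l2 e \<ge> lo2" using fin_lb[OF fin(3,4)] by blast
  define t where "t = hi1 - lo2 + 1"
  define x where "x w = (if w \<in> V1 then x1 w else x2 w + t)" for w
  define y where "y w = (if w \<in> V1 then y1 w else y2 w)" for w
  define lane where "lane e = (if e \<in> E1 then l1 e else if e \<in> E2 then l2 e + t else x1 r + 1 / (real iR + 2))" for e
  have nE12: "e \<notin> E1" if "e \<in> E2" for e using that E1V E2V dj by auto
  have nE: "(c, r) \<notin> E1" "(c, r) \<notin> E2" using E1V E2V dj rV cV by auto
  have GA: "Good V1 E1 x y lane" by (rule Good_cong[OF G1]) (auto simp: x_def y_def lane_def)
  have GB: "Good V2 E2 x y lane"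
    by (rule Good_cong[OF Good_translate[OF G2, of t]]) (use dj nE12 in \<open>auto simp: x_def y_def lane_def\<close>)
  have bA: "\<forall>w\<in>V1. x w < hi1 + 1/2" "\<forall>e\<in>E1. lane e < hi1 + 1/2" using hi1 by (auto simp: x_def lane_def)
  have bB: "\<forall>w\<in>V2. x w > hi1 + 1/2" "\<forall>e\<in>E2. lane e > hi1 + 1/2"
    using lo2 dj nE12 by (auto simp: x_def lane_def t_def)
  have GU: "Good (V1 \<union> V2) (E1 \<union> E2) x y lane" by (rule Good_union[OF GA GB dj bA bB])
  obtain sep: "\<forall>w\<in>V1. w \<noteq> r \<longrightarrow> x1 w \<ge> x1 r + 1 \<or> x1 w \<le> x1 r - 1"
    and lv: "\<forall>w\<in>V1. x1 w > x1 r \<longrightarrow> y1 w \<ge> Y - int iR" "\<forall>w\<in>V1. x1 w < x1 r \<longrightarrow> y1 w \<ge> Y - int iL"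
    and ed: "\<forall>e\<in>E1. (x1 (fst e) \<ge> x1 r + 1 \<and> x1 (snd e) \<ge> x1 r + 1 \<and> l1 e \<ge> x1 r + 1) \<or>
         (x1 (fst e) \<le> x1 r - 1 \<and> x1 (snd e) \<le> x1 r - 1 \<and> l1 e \<le> x1 r - 1) \<or>
         (snd e = r \<and> x1 (fst e) \<ge> x1 r + 1 \<and> x1 r + 1 / (real iR + 1) \<le> l1 e) \<or>
         (snd e = r \<and> x1 (fst e) \<le> x1 r - 1 \<and> l1 e \<le> x1 r - 1 / (real iL + 1))"
    using S1 unfolding SNK_def by blast
  have xr: "x r = x1 r" using rV by (simp add: x_def)
  have x1r: "x1 r \<le> hi1" using hi1 rV by auto
  have xV1: "x w = x1 w" "y w = y1 w" if "w \<in> V1" for w using that by (simp_all add: x_def y_def)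
  have xV2: "x w = x2 w + t" "y w = y2 w" if "w \<in> V2" for w using that dj by (auto simp: x_def y_def)
  have lE1: "lane e = l1 e" if "e \<in> E1" for e using that by (simp add: lane_def)
  have lE2: "lane e = l2 e + t" if "e \<in> E2" for e using that nE12 by (simp add: lane_def)
  have big2: "x w \<ge> x r + 1" if "w \<in> V2" for w using xV2[OF that] lo2 that x1r xr unfolding t_def by force
  have bigl2: "lane e \<ge> x r + 1" if "e \<in> E2" for e using lE2[OF that] lo2 that x1r xr unfolding t_def by force
  have ipos: "0 < 1 / (real i + 1)" for i :: nat by simp
  have imono: "1 / (real i + 2) \<le> 1 / (real i + 1)" for i :: nat by (simp add: divide_simps)
  have ed1: "(x (fst e) \<ge> x r + 1 \<and> x (snd e) \<ge> x r + 1 \<and> lane e \<ge> x r + 1) \<or>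
         (x (fst e) \<le> x r - 1 \<and> x (snd e) \<le> x r - 1 \<and> lane e \<le> x r - 1) \<or>
         (snd e = r \<and> x (fst e) \<ge> x r + 1 \<and> x r + 1 / (real iR + 1) \<le> lane e) \<or>
         (snd e = r \<and> x (fst e) \<le> x r - 1 \<and> lane e \<le> x r - 1 / (real iL + 1))" if e: "e \<in> E1" for e
  proof -
    have fe: "fst e \<in> V1" "snd e \<in> V1" using sub_ends[OF E1V e] by auto
    show ?thesis unfolding xV1[OF fe(1)] xV1[OF fe(2)] lE1[OF e] xr using ed e by blast
  qed
  have ln0: "lane (c, r) = x r + 1 / (real iR + 2)" using nE xr by (simp add: lane_def)
  have "Good (V1 \<union> V2) (insert (c, r) (E1 \<union> E2)) x y lane"
  proof (rule snk_right_step[OF GU dj rV cV E1V E2V])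
    show "y r = Y" using rV yr by (simp add: y_def)
    show "\<forall>w\<in>V1. w \<noteq> r \<longrightarrow> x r + 1 \<le> x w \<or> x w \<le> x r - 1" using sep xV1 xr by auto
    show "\<forall>w\<in>V1. x r < x w \<longrightarrow> Y - int iR \<le> y w" using lv xV1 xr by auto
    show "\<forall>e\<in>E1. x r + 1 \<le> x (fst e) \<and> x r + 1 \<le> x (snd e) \<and> x r + 1 \<le> lane e \<or>
        x (fst e) \<le> x r - 1 \<and> x (snd e) \<le> x r - 1 \<and> lane e \<le> x r - 1 \<or>
        snd e = r \<and> x r + 1 \<le> x (fst e) \<and> x r + 1 / (real iR + 1) \<le> lane e \<or>
        snd e = r \<and> x (fst e) \<le> x r - 1 \<and> lane e < x r"
    proof
      fix e assume e: "e \<in> E1"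
      show "x r + 1 \<le> x (fst e) \<and> x r + 1 \<le> x (snd e) \<and> x r + 1 \<le> lane e \<or>
        x (fst e) \<le> x r - 1 \<and> x (snd e) \<le> x r - 1 \<and> lane e \<le> x r - 1 \<or>
        snd e = r \<and> x r + 1 \<le> x (fst e) \<and> x r + 1 / (real iR + 1) \<le> lane e \<or>
        snd e = r \<and> x (fst e) \<le> x r - 1 \<and> lane e < x r"
        using ed1[OF e] ipos[of iL] by linarith
    qed
    show "y c = Y - int iR - 1" using xV2[OF cV] yc by simp
    show "\<forall>w\<in>V2. w \<noteq> c \<longrightarrow> y c < y w" using ab2 xV2 cV by auto
    show "\<forall>w\<in>V2. x r + 1 \<le> x w" "\<forall>e\<in>E2. x r + 1 \<le> lane e" using big2 bigl2 by auto
    show "lane (c, r) = x r + 1 / (real iR + 2)" by (rule ln0)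
  qed
  moreover have "y r = Y" using rV yr by (simp add: y_def)
  moreover have "\<forall>e\<in>insert (c, r) (E1 \<union> E2). y (snd e) - y (fst e) \<le> s"
  proof
    fix e assume e: "e \<in> insert (c, r) (E1 \<union> E2)"
    show "y (snd e) - y (fst e) \<le> s"
    proof (cases "e \<in> E1")
      case True
      then show ?thesis using sp1 sub_ends[OF E1V True] by (simp add: y_def)
    next
      case False
      show ?thesis
      proof (cases "e \<in> E2")
        case True
        then have "fst e \<notin> V1" "snd e \<notin> V1" using sub_ends[OF E2V] dj by blast+
        then show ?thesis using sp2 True by (simp add: y_def)
      next
        case False
        then have "e = (c, r)" using e \<open>e \<notin> E1\<close> by auto
        then show ?thesis using rV cV dj yr yc rk by (auto simp: y_def)
      qed
    qed
  qed
  moreover have "SNK (V1 \<union> V2) (insert (c, r) (E1 \<union> E2)) r x y lane Y (Suc iR) iL"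
    unfolding SNK_def
  proof (intro conjI)
    show "iL \<le> Suc iR" "Suc iR \<le> iL + 1" using eq by auto
    show "\<forall>w\<in>V1 \<union> V2. w \<noteq> r \<longrightarrow> x r + 1 \<le> x w \<or> x w \<le> x r - 1"
      using sep xV1 xr big2 by auto
    show "\<forall>w\<in>V1 \<union> V2. x r < x w \<longrightarrow> Y - int (Suc iR) \<le> y w"
    proof (intro ballI impI)
      fix w assume w: "w \<in> V1 \<union> V2" and xw: "x r < x w"
      show "Y - int (Suc iR) \<le> y w"
      proof (cases "w \<in> V1")
        case True
        then show ?thesis using lv(1) xw xV1[OF True] xr by force
      next
        case False
        then have "w \<in> V2" using w by auto
        then show ?thesis using ab2 xV2 yc by force
      qed
    qed
    show "\<forall>w\<in>V1 \<union> V2. x w < x r \<longrightarrow> Y - int iL \<le> y w"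
    proof (intro ballI impI)
      fix w assume w: "w \<in> V1 \<union> V2" and xw: "x w < x r"
      show "Y - int iL \<le> y w"
      proof (cases "w \<in> V1")
        case True
        then show ?thesis using lv(2) xw xV1[OF True] xr by force
      next
        case False
        then have "w \<in> V2" using w by auto
        then show ?thesis using big2 xw by force
      qed
    qed
    show "\<forall>e\<in>insert (c, r) (E1 \<union> E2).
       x r + 1 \<le> x (fst e) \<and> x r + 1 \<le> x (snd e) \<and> x r + 1 \<le> lane e \<or>
       x (fst e) \<le> x r - 1 \<and> x (snd e) \<le> x r - 1 \<and> lane e \<le> x r - 1 \<or>
       snd e = r \<and> x r + 1 \<le> x (fst e) \<and> x r + 1 / (real (Suc iR) + 1) \<le> lane e \<or>
       snd e = r \<and> x (fst e) \<le> x r - 1 \<and> lane e \<le> x r - 1 / (real iL + 1)"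
    proof
      fix e assume e: "e \<in> insert (c, r) (E1 \<union> E2)"
      have im: "1 / (real (Suc iR) + 1) \<le> 1 / (real iR + 1)" using imono[of iR] by (simp add: add.commute)
      show "x r + 1 \<le> x (fst e) \<and> x r + 1 \<le> x (snd e) \<and> x r + 1 \<le> lane e \<or>
       x (fst e) \<le> x r - 1 \<and> x (snd e) \<le> x r - 1 \<and> lane e \<le> x r - 1 \<or>
       snd e = r \<and> x r + 1 \<le> x (fst e) \<and> x r + 1 / (real (Suc iR) + 1) \<le> lane e \<or>
       snd e = r \<and> x (fst e) \<le> x r - 1 \<and> lane e \<le> x r - 1 / (real iL + 1)"
      proof (cases "e \<in> E1")
        case True
        then show ?thesis using ed1[OF True] im by linarith
      next
        case False
        show ?thesis
        proof (cases "e \<in> E2")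
          case True
          have fe: "fst e \<in> V2" "snd e \<in> V2" using sub_ends[OF E2V True] by auto
          then show ?thesis using big2 bigl2 True by auto
        next
          case False
          then have ee: "e = (c, r)" using e \<open>e \<notin> E1\<close> by auto
          have "lane e = x r + 1 / (real (Suc iR) + 1)" using ln0 ee by (simp add: add.commute)
          then show ?thesis using ee big2[OF cV] by simp
        qed
      qed
    qed
  qed
  ultimately show ?thesis by blast
qed

lemma case_left:
  fixes s :: int
  assumes G1: "Good V1 E1 x1 y1 l1" and yr: "y1 r = Y" and sp1: "\<forall>e\<in>E1. y1 (snd e) - y1 (fst e) \<le> s"
    and S1: "SNK V1 E1 r x1 y1 l1 Y iR iL" and eq: "iR = iL + 1"
    and G2: "Good V2 E2 x2 y2 l2" and yc: "y2 c = Y - int iL - 1" and sp2: "\<forall>e\<in>E2. y2 (snd e) - y2 (fst e) \<le> s"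
    and ab2: "\<forall>w\<in>V2. w \<noteq> c \<longrightarrow> y2 w > y2 c" and rk: "int iL + 1 \<le> s"
    and fin: "finite V1" "finite E1" "finite V2" "finite E2"
    and rV: "r \<in> V1" and cV: "c \<in> V2" and dj: "V1 \<inter> V2 = {}"
    and E1V: "E1 \<subseteq> V1 \<times> V1" and E2V: "E2 \<subseteq> V2 \<times> V2"
  shows "\<exists>x y lane. Good (V1 \<union> V2) (insert (c, r) (E1 \<union> E2)) x y lane \<and> y r = Y \<and>
     (\<forall>e\<in>insert (c, r) (E1 \<union> E2). y (snd e) - y (fst e) \<le> s) \<and>
     SNK (V1 \<union> V2) (insert (c, r) (E1 \<union> E2)) r x y lane Y iR (Suc iL)"
proof -
  obtain hi1 where hi1: "\<forall>w\<in>V1. x1 w \<ge> hi1" "\<forall>e\<in>E1. l1 e \<ge> hi1" using fin_lb[OF fin(1,2)] by blast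
  obtain lo2 where lo2: "\<forall>w\<in>V2. x2 w \<le> lo2" "\<forall>e\<in>E2. l2 e \<le> lo2" using fin_ub[OF fin(3,4)] by blast
  define t where "t = hi1 - lo2 - 1"
  define x where "x w = (if w \<in> V1 then x1 w else x2 w + t)" for w
  define y where "y w = (if w \<in> V1 then y1 w else y2 w)" for w
  define lane where "lane e = (if e \<in> E1 then l1 e else if e \<in> E2 then l2 e + t else x1 r - 1 / (real iL + 2))" for e
  have nE12: "e \<notin> E1" if "e \<in> E2" for e using that E1V E2V dj by auto
  have nE: "(c, r) \<notin> E1" "(c, r) \<notin> E2" using E1V E2V dj rV cV by auto
  have GA: "Good V1 E1 x y lane" by (rule Good_cong[OF G1]) (auto simp: x_def y_def lane_def)
  have GB: "Good V2 E2 x y lane"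
    by (rule Good_cong[OF Good_translate[OF G2, of t]]) (use dj nE12 in \<open>auto simp: x_def y_def lane_def\<close>)
  have bA: "\<forall>w\<in>V1. x w > hi1 - 1/2" "\<forall>e\<in>E1. lane e > hi1 - 1/2" using hi1 by (auto simp: x_def lane_def)
  have bB: "\<forall>w\<in>V2. x w < hi1 - 1/2" "\<forall>e\<in>E2. lane e < hi1 - 1/2"
    using lo2 dj nE12 by (auto simp: x_def lane_def t_def)
  have dj': "V2 \<inter> V1 = {}" using dj by auto
  have GU: "Good (V1 \<union> V2) (E1 \<union> E2) x y lane" using Good_union[OF GB GA dj' bB bA] by (simp add: Un_commute)
  obtain sep: "\<forall>w\<in>V1. w \<noteq> r \<longrightarrow> x1 w \<ge> x1 r + 1 \<or> x1 w \<le> x1 r - 1"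
    and lv: "\<forall>w\<in>V1. x1 w > x1 r \<longrightarrow> y1 w \<ge> Y - int iR" "\<forall>w\<in>V1. x1 w < x1 r \<longrightarrow> y1 w \<ge> Y - int iL"
    and ed: "\<forall>e\<in>E1. (x1 (fst e) \<ge> x1 r + 1 \<and> x1 (snd e) \<ge> x1 r + 1 \<and> l1 e \<ge> x1 r + 1) \<or>
         (x1 (fst e) \<le> x1 r - 1 \<and> x1 (snd e) \<le> x1 r - 1 \<and> l1 e \<le> x1 r - 1) \<or>
         (snd e = r \<and> x1 (fst e) \<ge> x1 r + 1 \<and> x1 r + 1 / (real iR + 1) \<le> l1 e) \<or>
         (snd e = r \<and> x1 (fst e) \<le> x1 r - 1 \<and> l1 e \<le> x1 r - 1 / (real iL + 1))"
    using S1 unfolding SNK_def by blast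
  have xr: "x r = x1 r" using rV by (simp add: x_def)
  have x1r: "x1 r \<ge> hi1" using hi1 rV by auto
  have xV1: "x w = x1 w" "y w = y1 w" if "w \<in> V1" for w using that by (simp_all add: x_def y_def)
  have xV2: "x w = x2 w + t" "y w = y2 w" if "w \<in> V2" for w using that dj by (auto simp: x_def y_def)
  have lE1: "lane e = l1 e" if "e \<in> E1" for e using that by (simp add: lane_def)
  have lE2: "lane e = l2 e + t" if "e \<in> E2" for e using that nE12 by (simp add: lane_def)
  have big2: "x w \<le> x r - 1" if "w \<in> V2" for w using xV2[OF that] lo2 that x1r xr unfolding t_def by force
  have bigl2: "lane e \<le> x r - 1" if "e \<in> E2" for e using lE2[OF that] lo2 that x1r xr unfolding t_def by force
  have ipos: "0 < 1 / (real i + 1)" for i :: nat by simp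
  have imono: "1 / (real i + 2) \<le> 1 / (real i + 1)" for i :: nat by (simp add: divide_simps)
  have ed1: "(x (fst e) \<ge> x r + 1 \<and> x (snd e) \<ge> x r + 1 \<and> lane e \<ge> x r + 1) \<or>
         (x (fst e) \<le> x r - 1 \<and> x (snd e) \<le> x r - 1 \<and> lane e \<le> x r - 1) \<or>
         (snd e = r \<and> x (fst e) \<ge> x r + 1 \<and> x r + 1 / (real iR + 1) \<le> lane e) \<or>
         (snd e = r \<and> x (fst e) \<le> x r - 1 \<and> lane e \<le> x r - 1 / (real iL + 1))" if e: "e \<in> E1" for e
  proof -
    have fe: "fst e \<in> V1" "snd e \<in> V1" using sub_ends[OF E1V e] by auto
    show ?thesis unfolding xV1[OF fe(1)] xV1[OF fe(2)] lE1[OF e] xr using ed e by blast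
  qed
  have ln0: "lane (c, r) = x r - 1 / (real iL + 2)" using nE xr by (simp add: lane_def)
  have "Good (V1 \<union> V2) (insert (c, r) (E1 \<union> E2)) x y lane"
  proof (rule snk_left_step[where iR=iL, OF GU dj rV cV E1V E2V])
    show "y r = Y" using rV yr by (simp add: y_def)
    show "\<forall>w\<in>V1. w \<noteq> r \<longrightarrow> x r + 1 \<le> x w \<or> x w \<le> x r - 1" using sep xV1 xr by auto
    show "\<forall>w\<in>V1. x w < x r \<longrightarrow> Y - int iL \<le> y w" using lv xV1 xr by auto
    show "\<forall>e\<in>E1. x r + 1 \<le> x (fst e) \<and> x r + 1 \<le> x (snd e) \<and> x r + 1 \<le> lane e \<or>
        x (fst e) \<le> x r - 1 \<and> x (snd e) \<le> x r - 1 \<and> lane e \<le> x r - 1 \<or>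
        snd e = r \<and> x (fst e) \<le> x r - 1 \<and> lane e \<le> x r - 1 / (real iL + 1) \<or>
        snd e = r \<and> x r + 1 \<le> x (fst e) \<and> x r < lane e"
    proof
      fix e assume e: "e \<in> E1"
      show "x r + 1 \<le> x (fst e) \<and> x r + 1 \<le> x (snd e) \<and> x r + 1 \<le> lane e \<or>
        x (fst e) \<le> x r - 1 \<and> x (snd e) \<le> x r - 1 \<and> lane e \<le> x r - 1 \<or>
        snd e = r \<and> x (fst e) \<le> x r - 1 \<and> lane e \<le> x r - 1 / (real iL + 1) \<or>
        snd e = r \<and> x r + 1 \<le> x (fst e) \<and> x r < lane e"
        using ed1[OF e] ipos[of iR] by linarith
    qed
    show "y c = Y - int iL - 1" using xV2[OF cV] yc by simp
    show "\<forall>w\<in>V2. w \<noteq> c \<longrightarrow> y c < y w" using ab2 xV2 cV by auto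
    show "\<forall>w\<in>V2. x w \<le> x r - 1" "\<forall>e\<in>E2. lane e \<le> x r - 1" using big2 bigl2 by auto
    show "lane (c, r) = x r - 1 / (real iL + 2)" by (rule ln0)
  qed
  moreover have "y r = Y" using rV yr by (simp add: y_def)
  moreover have "\<forall>e\<in>insert (c, r) (E1 \<union> E2). y (snd e) - y (fst e) \<le> s"
  proof
    fix e assume e: "e \<in> insert (c, r) (E1 \<union> E2)"
    show "y (snd e) - y (fst e) \<le> s"
    proof (cases "e \<in> E1")
      case True
      then show ?thesis using sp1 sub_ends[OF E1V True] by (simp add: y_def)
    next
      case False
      show ?thesis
      proof (cases "e \<in> E2")
        case True
        then have "fst e \<notin> V1" "snd e \<notin> V1" using sub_ends[OF E2V] dj by blast+
        then show ?thesis using sp2 True by (simp add: y_def)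
      next
        case False
        then have "e = (c, r)" using e \<open>e \<notin> E1\<close> by auto
        then show ?thesis using rV cV dj yr yc rk by (auto simp: y_def)
      qed
    qed
  qed
  moreover have "SNK (V1 \<union> V2) (insert (c, r) (E1 \<union> E2)) r x y lane Y iR (Suc iL)"
    unfolding SNK_def
  proof (intro conjI)
    show "Suc iL \<le> iR" "iR \<le> Suc iL + 1" using eq by auto
    show "\<forall>w\<in>V1 \<union> V2. w \<noteq> r \<longrightarrow> x r + 1 \<le> x w \<or> x w \<le> x r - 1"
      using sep xV1 xr big2 by auto
    show "\<forall>w\<in>V1 \<union> V2. x r < x w \<longrightarrow> Y - int iR \<le> y w"
    proof (intro ballI impI)
      fix w assume w: "w \<in> V1 \<union> V2" and xw: "x r < x w"
      show "Y - int iR \<le> y w"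
      proof (cases "w \<in> V1")
        case True
        then show ?thesis using lv(1) xw xV1[OF True] xr by force
      next
        case False
        then have "w \<in> V2" using w by auto
        then show ?thesis using big2 xw by force
      qed
    qed
    show "\<forall>w\<in>V1 \<union> V2. x w < x r \<longrightarrow> Y - int (Suc iL) \<le> y w"
    proof (intro ballI impI)
      fix w assume w: "w \<in> V1 \<union> V2" and xw: "x w < x r"
      show "Y - int (Suc iL) \<le> y w"
      proof (cases "w \<in> V1")
        case True
        then show ?thesis using lv(2) xw xV1[OF True] xr by force
      next
        case False
        then have "w \<in> V2" using w by auto
        then show ?thesis using ab2 xV2 yc by force
      qed
    qed
    show "\<forall>e\<in>insert (c, r) (E1 \<union> E2).
       x r + 1 \<le> x (fst e) \<and> x r + 1 \<le> x (snd e) \<and> x r + 1 \<le> lane e \<or>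
       x (fst e) \<le> x r - 1 \<and> x (snd e) \<le> x r - 1 \<and> lane e \<le> x r - 1 \<or>
       snd e = r \<and> x r + 1 \<le> x (fst e) \<and> x r + 1 / (real iR + 1) \<le> lane e \<or>
       snd e = r \<and> x (fst e) \<le> x r - 1 \<and> lane e \<le> x r - 1 / (real (Suc iL) + 1)"
    proof
      fix e assume e: "e \<in> insert (c, r) (E1 \<union> E2)"
      have im: "1 / (real (Suc iL) + 1) \<le> 1 / (real iL + 1)" using imono[of iL] by (simp add: add.commute)
      show "x r + 1 \<le> x (fst e) \<and> x r + 1 \<le> x (snd e) \<and> x r + 1 \<le> lane e \<or>
       x (fst e) \<le> x r - 1 \<and> x (snd e) \<le> x r - 1 \<and> lane e \<le> x r - 1 \<or>
       snd e = r \<and> x r + 1 \<le> x (fst e) \<and> x r + 1 / (real iR + 1) \<le> lane e \<or>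
       snd e = r \<and> x (fst e) \<le> x r - 1 \<and> lane e \<le> x r - 1 / (real (Suc iL) + 1)"
      proof (cases "e \<in> E1")
        case True
        then show ?thesis using ed1[OF True] im by linarith
      next
        case False
        show ?thesis
        proof (cases "e \<in> E2")
          case True
          have fe: "fst e \<in> V2" "snd e \<in> V2" using sub_ends[OF E2V True] by auto
          then show ?thesis using big2 bigl2 True by auto
        next
          case False
          then have ee: "e = (c, r)" using e \<open>e \<notin> E1\<close> by auto
          have "lane e = x r - 1 / (real (Suc iL) + 1)" using ln0 ee by (simp add: add.commute)
          then show ?thesis using ee big2[OF cV] by simp
        qed
      qed
    qed
  qed
  ultimately show ?thesis by blast
qed




lemma vdeg_mono: "finite E \<Longrightarrow> E' \<subseteq> E \<Longrightarrow> vdegree E' w \<le> vdegree E w"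
  unfolding vdegree_def by (rule card_mono) auto

lemma vdeg_insert:
  assumes "finite E1" "e \<notin> E1" "fst e = r \<or> snd e = r" "\<forall>f\<in>E2. fst f \<noteq> r \<and> snd f \<noteq> r"
  shows "vdegree (insert e (E1 \<union> E2)) r = Suc (vdegree E1 r)"
proof -
  have "{f \<in> insert e (E1 \<union> E2). fst f = r \<or> snd f = r} = insert e {f \<in> E1. fst f = r \<or> snd f = r}"
    using assms by auto
  then show ?thesis unfolding vdegree_def using assms by simp
qed

lemma src_sub: "is_source E w \<Longrightarrow> E' \<subseteq> E \<Longrightarrow> is_source E' w" unfolding is_source_def by auto
lemma snk_sub: "is_sink E w \<Longrightarrow> E' \<subseteq> E \<Longrightarrow> is_sink E' w" unfolding is_sink_def by auto

lemma draw_main: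
  assumes "rtree V E r"
  shows "\<And>Y src. (\<forall>w\<in>V. vdegree E w \<le> d) \<Longrightarrow> (\<forall>w\<in>V. is_source E w \<or> is_sink E w) \<Longrightarrow>
    (src \<longrightarrow> is_source E r) \<Longrightarrow> (\<not> src \<longrightarrow> is_sink E r) \<Longrightarrow>
    \<exists>x y lane. Good V E x y lane \<and> y r = Y \<and> (\<forall>e\<in>E. y (snd e) - y (fst e) \<le> int (d div 2 + 1)) \<and>
      (src \<longrightarrow> (\<forall>w\<in>V. w \<noteq> r \<longrightarrow> y w > Y)) \<and>
      (\<not> src \<longrightarrow> (\<exists>iR iL. iR + iL = vdegree E r \<and> SNK V E r x y lane Y iR iL))"
  using assms
proof (induction arbitrary: rule: rtree.induct)
  case (base r)
  have "Good {r} {} (\<lambda>_. 0) (\<lambda>_. Y) (\<lambda>_. 0)" by (rule Good_empty)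
  moreover have "vdegree {} r = 0" by (simp add: vdegree_def)
  moreover have "SNK {r} {} r (\<lambda>_. 0) (\<lambda>_. Y) (\<lambda>_. 0) Y 0 0" by (simp add: SNK_def)
  ultimately show ?case by fastforce
next
  case (attach V1 E1 r V2 E2 c e)
  define s where "s = int (d div 2 + 1)"
  define E where "E = insert e (E1 \<union> E2)"
  have B1: "finite V1" "finite E1" "r \<in> V1" "E1 \<subseteq> V1 \<times> V1" using rtree_basic[OF attach.hyps(1)] by auto
  have B2: "finite V2" "finite E2" "c \<in> V2" "E2 \<subseteq> V2 \<times> V2" using rtree_basic[OF attach.hyps(2)] by auto
  note dj = attach.hyps(3)
  have finE: "finite E" unfolding E_def using B1 B2 by auto
  have sub1: "E1 \<subseteq> E" and sub2: "E2 \<subseteq> E" unfolding E_def by auto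
  have eE: "e \<in> E" unfolding E_def by auto
  have deg: "\<forall>w\<in>V1 \<union> V2. vdegree E w \<le> d" using attach.prems(1) unfolding E_def .
  have bip: "\<forall>w\<in>V1 \<union> V2. is_source E w \<or> is_sink E w" using attach.prems(2) unfolding E_def .
  have deg1: "\<forall>w\<in>V1. vdegree E1 w \<le> d" using deg vdeg_mono[OF finE sub1] by (meson UnI1 le_trans)
  have deg2: "\<forall>w\<in>V2. vdegree E2 w \<le> d" using deg vdeg_mono[OF finE sub2] by (meson UnI2 le_trans)
  have bip1: "\<forall>w\<in>V1. is_source E1 w \<or> is_sink E1 w" using bip src_sub[OF _ sub1] snk_sub[OF _ sub1] by blast
  have bip2: "\<forall>w\<in>V2. is_source E2 w \<or> is_sink E2 w" using bip src_sub[OF _ sub2] snk_sub[OF _ sub2] by blast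
  have rV2: "r \<notin> V2" and cV1: "c \<notin> V1" using dj B1 B2 by auto
  have eE1: "e \<notin> E1" using attach.hyps(4) B1(4) cV1 by auto
  have eE2: "e \<notin> E2" using attach.hyps(4) B2(4) rV2 by auto
  have nr2: "\<forall>f\<in>E2. fst f \<noteq> r \<and> snd f \<noteq> r" using B2(4) rV2 by auto
  have nc1: "\<forall>f\<in>E1. fst f \<noteq> c \<and> snd f \<noteq> c" using B1(4) cV1 by auto
  have vr: "vdegree E r = Suc (vdegree E1 r)"
    unfolding E_def by (rule vdeg_insert[OF B1(2) eE1 _ nr2]) (use attach.hyps(4) in auto)
  have vc: "vdegree E c = Suc (vdegree E2 c)"
  proof -
    have "vdegree (insert e (E2 \<union> E1)) c = Suc (vdegree E2 c)"
      by (rule vdeg_insert[OF B2(2) eE2 _ nc1]) (use attach.hyps(4) in auto)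
    then show ?thesis unfolding E_def by (simp add: Un_commute)
  qed
  have vrd: "vdegree E r \<le> d" and vcd: "vdegree E c \<le> d" using deg B1 B2 by auto
  show ?case
  proof (cases src)
    case True
    have srcr: "is_source E r" using True attach.prems(3) unfolding E_def by simp
    have ee: "e = (r, c)" using attach.hyps(4) srcr eE unfolding is_source_def by auto
    have snkc: "is_sink E c"
    proof -
      have "\<not> is_source E c" using eE ee unfolding is_source_def by auto
      then show ?thesis using bip B2 unfolding E_def by auto
    qed
    obtain x1 y1 l1 where R1: "Good V1 E1 x1 y1 l1" "y1 r = Y" "\<forall>e\<in>E1. y1 (snd e) - y1 (fst e) \<le> s"
      "\<forall>w\<in>V1. w \<noteq> r \<longrightarrow> y1 w > Y"
      using attach.IH(1)[where Y=Y and src=True, OF deg1 bip1] src_sub[OF srcr sub1] unfolding s_def by blast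
    obtain x2 y2 l2 iR iL where R2: "Good V2 E2 x2 y2 l2" "y2 c = Y + s" "\<forall>e\<in>E2. y2 (snd e) - y2 (fst e) \<le> s"
      "iR + iL = vdegree E2 c" "SNK V2 E2 c x2 y2 l2 (Y + s) iR iL"
      using attach.IH(2)[where Y="Y + s" and src=False, OF deg2 bip2] snk_sub[OF snkc sub2] unfolding s_def by blast
    have "iL \<le> iR" "iR \<le> iL + 1" using R2(5) unfolding SNK_def by auto
    then have "int iR < s" using R2(4) vc vcd unfolding s_def by linarith
    then obtain x y lane where
      "Good (V1 \<union> V2) (insert (r, c) (E1 \<union> E2)) x y lane \<and> y r = Y \<and>
     (\<forall>e\<in>insert (r, c) (E1 \<union> E2). y (snd e) - y (fst e) \<le> s) \<and> (\<forall>w\<in>V1 \<union> V2. w \<noteq> r \<longrightarrow> y w > Y)"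
      using case_src[OF R1 R2(1,2,3,5) _ B1(1,2) B2(1,2) B1(3) B2(3) dj B1(4) B2(4)] by blast
    then show ?thesis using True ee unfolding s_def by blast
  next
    case False
    have snkr: "is_sink E r" using False attach.prems(4) unfolding E_def by simp
    have ee: "e = (c, r)" using attach.hyps(4) snkr eE unfolding is_sink_def by auto
    have srcc: "is_source E c"
    proof -
      have "\<not> is_sink E c" using eE ee unfolding is_sink_def by auto
      then show ?thesis using bip B2 unfolding E_def by auto
    qed
    obtain x1 y1 l1 iR iL where R1: "Good V1 E1 x1 y1 l1" "y1 r = Y" "\<forall>e\<in>E1. y1 (snd e) - y1 (fst e) \<le> s"
      "iR + iL = vdegree E1 r" "SNK V1 E1 r x1 y1 l1 Y iR iL"
      using attach.IH(1)[where Y=Y and src=False, OF deg1 bip1] snk_sub[OF snkr sub1] unfolding s_def by blast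
    have ii: "iL \<le> iR" "iR \<le> iL + 1" using R1(5) unfolding SNK_def by auto
    show ?thesis
    proof (cases "iR = iL")
      case True
      obtain x2 y2 l2 where R2: "Good V2 E2 x2 y2 l2" "y2 c = Y - int iR - 1" "\<forall>e\<in>E2. y2 (snd e) - y2 (fst e) \<le> s"
        "\<forall>w\<in>V2. w \<noteq> c \<longrightarrow> y2 w > Y - int iR - 1"
        using attach.IH(2)[where Y="Y - int iR - 1" and src=True, OF deg2 bip2] src_sub[OF srcc sub2] unfolding s_def by blast
      have rk: "int iR + 1 \<le> s" using R1(4) vr vrd True unfolding s_def by linarith
      obtain x y lane where
        "Good (V1 \<union> V2) (insert (c, r) (E1 \<union> E2)) x y lane \<and> y r = Y \<and>
         (\<forall>e\<in>insert (c, r) (E1 \<union> E2). y (snd e) - y (fst e) \<le> s) \<and>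
         SNK (V1 \<union> V2) (insert (c, r) (E1 \<union> E2)) r x y lane Y (Suc iR) iL"
        using case_right[OF R1(1,2,3,5) True R2(1,2,3) _ rk B1(1,2) B2(1,2) B1(3) B2(3) dj B1(4) B2(4)] R2(4) R2(2)
        by auto
      moreover have "Suc iR + iL = vdegree E r" using vr R1(4) by simp
      ultimately show ?thesis using False ee unfolding s_def E_def by blast
    next
      case False
      then have eq: "iR = iL + 1" using ii by simp
      obtain x2 y2 l2 where R2: "Good V2 E2 x2 y2 l2" "y2 c = Y - int iL - 1" "\<forall>e\<in>E2. y2 (snd e) - y2 (fst e) \<le> s"
        "\<forall>w\<in>V2. w \<noteq> c \<longrightarrow> y2 w > Y - int iL - 1"
        using attach.IH(2)[where Y="Y - int iL - 1" and src=True, OF deg2 bip2] src_sub[OF srcc sub2] unfolding s_def by blast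
      have rk: "int iL + 1 \<le> s" using R1(4) vr vrd eq unfolding s_def by linarith
      obtain x y lane where
        "Good (V1 \<union> V2) (insert (c, r) (E1 \<union> E2)) x y lane \<and> y r = Y \<and>
         (\<forall>e\<in>insert (c, r) (E1 \<union> E2). y (snd e) - y (fst e) \<le> s) \<and>
         SNK (V1 \<union> V2) (insert (c, r) (E1 \<union> E2)) r x y lane Y iR (Suc iL)"
        using case_left[OF R1(1,2,3,5) eq R2(1,2,3) _ rk B1(1,2) B2(1,2) B1(3) B2(3) dj B1(4) B2(4)] R2(4) R2(2)
        by auto
      moreover have "iR + Suc iL = vdegree E r" using vr R1(4) by simp
      ultimately show ?thesis using \<open>\<not> src\<close> ee unfolding s_def E_def by blast
    qed
  qed
qed


theorem mainTheorem8:
  fixes V :: "'a set" and E :: "('a \<times> 'a) set"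
  assumes "directed_tree V E"
    and "\<forall>v\<in>V. is_source E v \<or> is_sink E v"
  shows "\<exists>pos curve. upward_planar_layered_drawing V E pos curve \<and>
           (\<forall>e\<in>E. edge_span pos e \<le> real (graph_degree V E div 2 + 1))"
proof -
  note F = dtree_facts[OF assms(1)]
  obtain r where r: "r \<in> V" using F(6) by auto
  have rt: "rtree V E r" using tree_to_rtree[OF assms(1) r] .
  define d where "d = graph_degree V E"
  have deg: "\<forall>w\<in>V. vdegree E w \<le> d"
    unfolding d_def graph_degree_def using F(1) by auto
  define src where "src = is_source E r"
  have t1: "src \<longrightarrow> is_source E r" and t2: "\<not> src \<longrightarrow> is_sink E r"
    using assms(2) r unfolding src_def by auto
  obtain x y lane where G: "Good V E x y lane"
    and sp: "\<forall>e\<in>E. y (snd e) - y (fst e) \<le> int (d div 2 + 1)"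
    using draw_main[OF rt deg assms(2) t1 t2, of 0] by blast
  have D: "upward_planar_layered_drawing V E (posf x y) (crv x y lane)" by (rule Good_drawing[OF G])
  have "\<forall>e\<in>E. edge_span (posf x y) e \<le> real (graph_degree V E div 2 + 1)"
  proof
    fix e assume e: "e \<in> E"
    have "real_of_int (y (snd e) - y (fst e)) \<le> real_of_int (int (d div 2 + 1))"
      using sp e by (simp only: of_int_le_iff)
    then show "edge_span (posf x y) e \<le> real (graph_degree V E div 2 + 1)"
      unfolding edge_span_def posf_def d_def by simp
  qed
  then show ?thesis using D by blast
qed

end
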